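(* Let $\{\omega^t\}_{t\in[0,1]}$ be nonnegative locally integrable functions on $\mathbb{T}$ with $\varphi^t=\log\omega^t$ such that $(t,x)\mapsto\varphi^t(x)$ is measurable and each $\varphi^t$ has mean value zero on $\mathbb{T}$. Let $\varphi(x)=\int_0^1\varphi^t(x+t)\,dt$. (a) If there is $C_3^d$ with $\varphi^t_I-\operatorname{ess\,inf}_{x\in I}\varphi^t(x)\le C_3^d$ for all $t\in[0,1]$ and all $I\in\mathcal{D}$, then there is $C_3$ depending only on $C_3^d$ with $\varphi_Q-\operatorname{ess\,inf}_{x\in Q}\varphi(x)\le C_3$ for all intervals $Q\subset\mathbb{T}$. (b) If there is $C_4^d$ with $\operatorname{ess\,sup}_{x\in I}\varphi^t(x)-\varphi^t_I\le C_4^d$ for all $t\in[0,1]$ and all $I\in\mathcal{D}$, then there is $C_4$ depending only on $C_4^d$ with $\operatorname{ess\,sup}_{x\in Q}\varphi(x)-\varphi_Q\le C_4$ for all intervals $Q\subset\mathbb{T}$.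
   Context: $\mathbb{T}$ is the circle $[0,1]$ with endpoints identified; $x+t$ taken mod 1. $\mathcal{D}$ is the set of dyadic intervals $\{[0,1]\}\cup\{[j2^{-k},(j+1)2^{-k}):k\in\mathbb{N},0\le j<2^k\}$. $f_E=\frac1{|E|}\int_Ef$. *)

theory Defs
  imports "HOL-Analysis.Analysis" "HOL-Probability.Essential_Supremum"
begin

text \<open>The circle T is modelled as [0,1); addition mod 1 is x + t taken through frac.\<close>

definition dyadic_intervals :: "real set set" where
  "dyadic_intervals = {{0..1}} \<union>
     {{real j / 2 ^ k ..< (real j + 1) / 2 ^ k} | k j. j < 2 ^ k}"

text \<open>Intervals (arcs) of the circle of positive length l, starting at a, possibly wrapping around.\<close>
definition circle_arc :: "real \<Rightarrow> real \<Rightarrow> real set" where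
  "circle_arc a l = (\<lambda>s. frac (a + s)) ` {0..<l}"

definition avg :: "(real \<Rightarrow> real) \<Rightarrow> real set \<Rightarrow> real" where
  "avg f E = (LINT x:E|lborel. f x) / measure lborel E"

definition ess_sup_on :: "real set \<Rightarrow> (real \<Rightarrow> real) \<Rightarrow> ereal" where
  "ess_sup_on E f = esssup (restrict_space lborel E) (\<lambda>x. ereal (f x))"

definition ess_inf_on :: "real set \<Rightarrow> (real \<Rightarrow> real) \<Rightarrow> ereal" where
  "ess_inf_on E f = - esssup (restrict_space lborel E) (\<lambda>x. - ereal (f x))"

text \<open>Standing hypotheses on the family phi t = log omega t, t in [0,1].\<close>
definition admissible_family :: "(real \<Rightarrow> real \<Rightarrow> real) \<Rightarrow> bool" where
  "admissible_family \<phi> \<longleftrightarrow>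
     (\<lambda>(t, x). \<phi> t x) \<in> borel_measurable (restrict_space (lborel \<Otimes>\<^sub>M lborel) ({0..1} \<times> {0..<1})) \<and>
     (\<forall>t\<in>{0..1}. set_integrable lborel {0..<1} (\<lambda>x. exp (\<phi> t x)) \<and>
                 set_integrable lborel {0..<1} (\<phi> t) \<and>
                 (LINT x:{0..<1}|lborel. \<phi> t x) = 0)"

definition averaged_phi :: "(real \<Rightarrow> real \<Rightarrow> real) \<Rightarrow> real \<Rightarrow> real" where
  "averaged_phi \<phi> x = (LINT t:{0..1}|lborel. \<phi> t (frac (x + t)))"

end

theory Submission
  imports Defs
begin

lemma shift_integrable: "integrable lborel (\<lambda>x. g (x + c)) \<longleftrightarrow> integrable lborel (g::real\<Rightarrow>real)"
  using lborel_integrable_real_affine_iff[of 1 g c] by (simp add: add.commute)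

lemma shift_integral: "(\<integral>x. g (x + c) \<partial>lborel) = (\<integral>x. (g::real\<Rightarrow>real) x \<partial>lborel)"
  using lborel_integral_real_affine[of 1 g c] by (simp add: add.commute)

lemma shift_AE: "Measurable.pred borel P \<Longrightarrow> AE x in lborel. P x \<Longrightarrow> AE x in lborel. P (x + (c::real))"
  using AE_borel_affine[of 1 P c] by (simp add: add.commute)

lemma ind_shift: "indicator {\<alpha>+c..<\<beta>+c} ((x::real) + c) = (indicator {\<alpha>..<\<beta>} x :: real)"
  by (simp add: indicator_def)

lemma shift_set_integrable:
  "set_integrable lborel {\<alpha>+c..<\<beta>+c} g \<longleftrightarrow> set_integrable lborel {\<alpha>..<\<beta>} (\<lambda>x. (g::real\<Rightarrow>real) (x + c))"
  unfolding set_integrable_def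
  using shift_integrable[of "\<lambda>x. indicator {\<alpha>+c..<\<beta>+c} x *\<^sub>R g x" c]
  by (simp add: ind_shift)

lemma shift_set_integral:
  "(LINT x:{\<alpha>+c..<\<beta>+c}|lborel. g x) = (LINT x:{\<alpha>..<\<beta>}|lborel. (g::real\<Rightarrow>real) (x + c))"
  unfolding set_lebesgue_integral_def
  using shift_integral[of "\<lambda>x. indicator {\<alpha>+c..<\<beta>+c} x *\<^sub>R g x" c]
  by (simp add: ind_shift)

lemma shift_set_AE:
  assumes "Measurable.pred borel P"
    and "AE x in lborel. x \<in> {\<alpha>+c..<\<beta>+c} \<longrightarrow> P x"
  shows "AE x in lborel. x \<in> {\<alpha>..<\<beta>} \<longrightarrow> P (x + (c::real))"
proof -
  have "AE x in lborel. (x + c) \<in> {\<alpha>+c..<\<beta>+c} \<longrightarrow> P (x + c)"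
    by (rule shift_AE[OF _ assms(2)]) (use assms(1) in measurable)
  then show ?thesis by simp
qed

lemma measure_Ico: "a \<le> b \<Longrightarrow> measure lborel {a..<(b::real)} = b - a"
  by simp

lemma set_integral_const_Ico: "a \<le> b \<Longrightarrow> (LINT x:{a..<(b::real)}|lborel. c) = (b - a) * c"
  by (simp add: set_integral_const)

lemma int_lb:
  fixes f :: "real \<Rightarrow> real"
  assumes "set_integrable lborel {\<alpha>..<\<beta>} f" "\<alpha> \<le> \<beta>"
    and "AE y in lborel. y \<in> {\<alpha>..<\<beta>} \<longrightarrow> c \<le> f y"
  shows "(\<beta> - \<alpha>) * c \<le> (LINT y:{\<alpha>..<\<beta>}|lborel. f y)"
proof -
  have "(LINT y:{\<alpha>..<\<beta>}|lborel. c) \<le> (LINT y:{\<alpha>..<\<beta>}|lborel. f y)"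
    apply (rule set_integral_mono_AE[OF _ assms(1)])
    using assms(2) apply (simp add: set_integrable_def)
    using assms(3) by auto
  then show ?thesis using assms(2) by (simp add: set_integral_const_Ico)
qed

definition dy :: "nat \<Rightarrow> int \<Rightarrow> real set" where
  "dy k m = {real_of_int m / 2^k ..< (real_of_int m + 1) / 2^k}"

lemma measure_dy: "measure lborel (dy k m) = 1 / 2^k"
  unfolding dy_def by (simp add: divide_simps diff_divide_distrib)

lemma dy_sets[measurable]: "dy k m \<in> sets lborel"
  unfolding dy_def by simp

lemma Ico_split_integral:
  fixes f :: "real \<Rightarrow> real"
  assumes "a \<le> b" "b \<le> c" "set_integrable lborel {a..<b} f" "set_integrable lborel {b..<c} f"
  shows "(LINT x:{a..<c}|lborel. f x) = (LINT x:{a..<b}|lborel. f x) + (LINT x:{b..<c}|lborel. f x)"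
proof -
  have "{a..<c} = {a..<b} \<union> {b..<c}" using assms by auto
  then show ?thesis using set_integral_Un[OF _ assms(3,4)] by auto
qed

locale perfun =
  fixes f :: "real \<Rightarrow> real" and C :: real
  assumes meas[measurable]: "f \<in> borel_measurable borel"
  and per: "\<And>y. f (y + 1) = f y"
  and int01: "set_integrable lborel {0..<1} f"
  and mean0: "(LINT y:{0..<1}|lborel. f y) = 0"
  and Cnn: "0 \<le> C"
  and dyad0: "\<And>k (j::nat). j < 2^k \<Longrightarrow>
      AE y in lborel. y \<in> dy k (int j) \<longrightarrow> avg f (dy k (int j)) - C \<le> f y"
begin

lemma per_nat: "f (y + real n) = f y"
proof (induction n arbitrary: y)
  case (Suc n)
  have "f (y + real (Suc n)) = f ((y + real n) + 1)" by (simp add: algebra_simps)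
  also have "\<dots> = f y" using per Suc by simp
  finally show ?case .
qed simp

lemma per_int: "f (y + real_of_int n) = f y"
proof (cases "n \<ge> 0")
  case True
  then have e: "real_of_int n = real (nat n)" by simp
  show ?thesis unfolding e by (rule per_nat)
next
  case False
  define k where "k = nat (- n)"
  have k: "real_of_int n = - real k" using False unfolding k_def by simp
  have "f (y + real_of_int n) = f ((y + real_of_int n) + real k)" by (simp add: per_nat)
  also have "\<dots> = f y" using k by simp
  finally show ?thesis .
qed

lemma int_unit: "set_integrable lborel {real_of_int n..<real_of_int n + 1} f"
proof -
  have "set_integrable lborel {0 + real_of_int n..<1 + real_of_int n} f"
    unfolding shift_set_integrable using int01 by (simp add: per_int)
  then show ?thesis by (simp add: add.commute)
qed

lemma int_block: "set_integrable lborel {real_of_int n..<real_of_int n + real N} f"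
proof (induction N)
  case 0 then show ?case by (simp add: set_integrable_def)
next
  case (Suc N)
  have eq: "{real_of_int n..<real_of_int n + real (Suc N)} =
     {real_of_int n..<real_of_int n + real N} \<union> {real_of_int (n + int N)..<real_of_int (n + int N) + 1}"
  proof -
    have e: "real_of_int (n + int N) = real_of_int n + real N" by simp
    show ?thesis unfolding e by (subst ivl_disj_un_two(3)) (auto simp: algebra_simps)
  qed
  show ?case unfolding eq by (rule set_integrable_Un[OF Suc int_unit]) simp_all
qed

lemma int_Ico: "set_integrable lborel {a..<b} f"
proof -
  define n where "n = \<lfloor>a\<rfloor>"
  define N where "N = nat \<lceil>b - real_of_int n\<rceil>"
  have "{a..<b} \<subseteq> {real_of_int n..<real_of_int n + real N}"
  proof
    fix x assume x: "x \<in> {a..<b}"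
    have "real_of_int n \<le> a" unfolding n_def by simp
    moreover have "b - real_of_int n \<le> real N" unfolding N_def by linarith
    ultimately show "x \<in> {real_of_int n..<real_of_int n + real N}" using x by auto
  qed
  then show ?thesis using set_integrable_subset[OF int_block] by auto
qed

lemma int_Ico_abs: "set_integrable lborel {a..<b} (\<lambda>x. \<bar>f x\<bar>)"
  using set_integrable_abs[OF int_Ico] .

lemma int_dy: "set_integrable lborel (dy k m) f"
  unfolding dy_def by (rule int_Ico)

lemma unit_int: "(LINT y:{real_of_int n..<real_of_int n + 1}|lborel. f y) = 0"
proof -
  have "(LINT y:{0 + real_of_int n..<1 + real_of_int n}|lborel. f y) = 0"
    unfolding shift_set_integral using mean0 by (simp add: per_int)
  then show ?thesis by (simp add: add.commute)
qed

lemma avg_dy0: "avg f (dy 0 m) = 0"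
  unfolding avg_def dy_def using unit_int[of m] by simp

lemma dy_shift: "dy k (m + 2^k * n) = {real_of_int m / 2^k + real_of_int n ..< (real_of_int m + 1) / 2^k + real_of_int n}"
  unfolding dy_def by (simp add: add_divide_distrib algebra_simps)

lemma avg_dy_shift: "avg f (dy k (m + 2^k * n)) = avg f (dy k m)"
proof -
  have "(LINT y:dy k (m + 2^k * n)|lborel. f y) = (LINT y:dy k m|lborel. f y)"
    unfolding dy_shift shift_set_integral by (simp add: per_int dy_def)
  then show ?thesis unfolding avg_def measure_dy by simp
qed

lemma dyad: "AE y in lborel. y \<in> dy k m \<longrightarrow> avg f (dy k m) - C \<le> f y"
proof -
  define m0 where "m0 = m mod 2^k"
  define n where "n = m div 2^k"
  have m: "m = m0 + 2^k * n" unfolding m0_def n_def by simp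
  have "0 \<le> m0" "m0 < 2^k" unfolding m0_def by simp_all
  then obtain j where j: "m0 = int j" "j < 2^k"
    by (metis nonneg_eq_int of_nat_less_iff of_nat_numeral of_nat_power)
  have A: "AE y in lborel. y \<in> dy k m0 \<longrightarrow> avg f (dy k m0) - C \<le> f y"
    using dyad0[OF j(2)] j(1) by simp
  have "AE x in lborel. x \<in> {real_of_int m0 / 2^k + real_of_int n ..< (real_of_int m0 + 1) / 2^k + real_of_int n}
      \<longrightarrow> avg f (dy k m0) - C \<le> f (x + - real_of_int n)"
    apply (rule shift_set_AE)
     apply measurable
    using A unfolding dy_def by simp
  then show ?thesis unfolding m avg_dy_shift unfolding dy_shift
    using per_int[of _ "-n"] by simp
qed

end

context perfun begin

lemma AE_sub:
  assumes "AE y in lborel. y \<in> A \<longrightarrow> P y" "B \<subseteq> A"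
  shows "AE y in lborel. y \<in> B \<longrightarrow> P y"
  using assms by (auto elim: AE_mp)

lemma avg_Ico: "a < b \<Longrightarrow> avg f {a..<b} = (LINT y:{a..<b}|lborel. f y) / (b - a)"
  unfolding avg_def by simp

lemma child_gen:
  assumes ab: "a < b"
    and ae: "AE y in lborel. y \<in> {a..<b} \<longrightarrow> avg f {a..<b} - C \<le> f y"
  shows "avg f {a..<(a+b)/2} \<le> avg f {a..<b} + C \<and> avg f {(a+b)/2..<b} \<le> avg f {a..<b} + C"
proof -
  define m where "m = (a+b)/2"
  define I where "I = (LINT y:{a..<b}|lborel. f y)"
  define I1 where "I1 = (LINT y:{a..<m}|lborel. f y)"
  define I2 where "I2 = (LINT y:{m..<b}|lborel. f y)"
  have am: "a < m" "m < b" using ab unfolding m_def by auto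
  have split: "I = I1 + I2" unfolding I_def I1_def I2_def
    by (rule Ico_split_integral) (use am in \<open>auto intro: int_Ico\<close>)
  have avg: "avg f {a..<b} = I / (b - a)" using avg_Ico[OF ab] I_def by simp
  have h: "m - a = (b - a) / 2" "b - m = (b - a)/2" unfolding m_def by (simp_all add: field_simps)
  have lb2: "(b - m) * (I / (b - a) - C) \<le> I2"
    unfolding I2_def
    by (rule int_lb[OF int_Ico]) (use am AE_sub[OF ae, of "{m..<b}"] avg in auto)
  have lb1: "(m - a) * (I / (b - a) - C) \<le> I1"
    unfolding I1_def
    by (rule int_lb[OF int_Ico]) (use am AE_sub[OF ae, of "{a..<m}"] avg in auto)
  have a1: "avg f {a..<m} = I1 / (m - a)" using avg_Ico[OF am(1)] I1_def by simp
  have a2: "avg f {m..<b} = I2 / (b - m)" using avg_Ico[OF am(2)] I2_def by simp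
  have ba: "0 < b - a" using ab by simp
  have hh: "(b - a) / 2 * (I / (b - a)) = I / 2" using ba by (simp add: field_simps)
  have lb2': "I / 2 - (b - a) / 2 * C \<le> I2" using lb2 unfolding h(2) right_diff_distrib hh .
  have lb1': "I / 2 - (b - a) / 2 * C \<le> I1" using lb1 unfolding h(1) right_diff_distrib hh .
  have "I1 \<le> (m - a) * (I / (b - a) + C)"
    unfolding h(1) distrib_left hh using lb2' split by linarith
  then have "I1 / (m - a) \<le> I / (b - a) + C" using am by (simp add: divide_simps mult.commute)
  moreover have "I2 \<le> (b - m) * (I / (b - a) + C)"
    unfolding h(2) distrib_left hh using lb1' split by linarith
  then have "I2 / (b - m) \<le> I / (b - a) + C" using am by (simp add: divide_simps mult.commute)
  ultimately show ?thesis using a1 a2 avg unfolding m_def by simp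
qed

lemma child_le: "avg f (dy (Suc k) m') \<le> avg f (dy k (m' div 2)) + C"
proof -
  define q where "q = m' div 2"
  define a where "a = real_of_int q / 2^k"
  define b where "b = (real_of_int q + 1) / 2^k"
  have ab: "a < b" unfolding a_def b_def by (simp add: divide_strict_right_mono)
  have dq: "dy k q = {a..<b}" unfolding dy_def a_def b_def ..
  have ae: "AE y in lborel. y \<in> {a..<b} \<longrightarrow> avg f {a..<b} - C \<le> f y"
    using dyad[of k q] unfolding dq .
  have c: "avg f {a..<(a+b)/2} \<le> avg f {a..<b} + C \<and> avg f {(a+b)/2..<b} \<le> avg f {a..<b} + C"
    by (rule child_gen[OF ab ae])
  have "m' = 2 * q \<or> m' = 2 * q + 1" unfolding q_def by auto
  then show ?thesis
  proof
    assume m: "m' = 2 * q"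
    have e1: "real_of_int m' / 2^(Suc k) = a" unfolding a_def m by (simp add: field_simps)
    have e2: "(real_of_int m' + 1) / 2^(Suc k) = (a+b)/2" unfolding a_def b_def m by (simp add: field_simps)
    have "dy (Suc k) m' = {a..<(a+b)/2}" unfolding dy_def e1 e2 ..
    then show ?thesis using c dq q_def by simp
  next
    assume m: "m' = 2 * q + 1"
    have e1: "real_of_int m' / 2^(Suc k) = (a+b)/2" unfolding a_def b_def m by (simp add: field_simps)
    have e2: "(real_of_int m' + 1) / 2^(Suc k) = b" unfolding b_def m by (simp add: field_simps)
    have "dy (Suc k) m' = {(a+b)/2..<b}" unfolding dy_def e1 e2 ..
    then show ?thesis using c dq q_def by simp
  qed
qed

lemma chain: "avg f (dy (k + n) m') \<le> avg f (dy k (m' div 2^n)) + real n * C"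
proof (induction n arbitrary: m')
  case 0 then show ?case by simp
next
  case (Suc n)
  have "avg f (dy (k + Suc n) m') \<le> avg f (dy (k + n) (m' div 2)) + C"
    using child_le[of "k + n" m'] by simp
  also have "\<dots> \<le> avg f (dy k ((m' div 2) div 2^n)) + real n * C + C"
    using Suc.IH[of "m' div 2"] by simp
  also have "(m' div 2) div 2^n = m' div 2^(Suc n)"
    by (simp add: zdiv_zmult2_eq)
  finally show ?case by (simp add: algebra_simps)
qed

lemma lb0: "AE y in lborel. y \<in> {0..<1} \<longrightarrow> - C \<le> f y"
  using dyad[of 0 0] avg_dy0[of 0] unfolding dy_def by simp

lemma L1_unit: "(LINT y:{0..<1}|lborel. \<bar>f y\<bar>) \<le> 2 * C"
proof -
  have "(LINT y:{0..<1}|lborel. \<bar>f y\<bar>) \<le> (LINT y:{0..<1}|lborel. f y + 2 * C)"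
    apply (rule set_integral_mono_AE[OF int_Ico_abs])
     apply (rule set_integral_add(1)[OF int_Ico])
     apply (simp add: set_integrable_def)
    using lb0 by (rule AE_mp) (use Cnn in \<open>auto intro!: AE_I2\<close>)
  also have "\<dots> = 2 * C"
    by (subst set_integral_add(2)[OF int_Ico]) (simp_all add: set_integrable_def mean0 set_integral_const)
  finally show ?thesis .
qed

lemma L1_n: "(LINT y:{real_of_int n..<real_of_int n + 1}|lborel. \<bar>f y\<bar>) \<le> 2 * C"
proof -
  have "(LINT y:{0 + real_of_int n..<1 + real_of_int n}|lborel. \<bar>f y\<bar>) \<le> 2 * C"
    unfolding shift_set_integral using L1_unit by (simp add: per_int)
  then show ?thesis by (simp add: add.commute)
qed

lemma L1_bound:
  assumes "0 \<le> l" "l \<le> 1"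
  shows "(LINT y:{u..<u+l}|lborel. \<bar>f y\<bar>) \<le> 4 * C"
proof -
  define n where "n = \<lfloor>u\<rfloor>"
  have n: "real_of_int n \<le> u" "u < real_of_int n + 1" unfolding n_def by linarith+
  have s1: "(LINT y:{real_of_int n..<real_of_int n + 2}|lborel. \<bar>f y\<bar>)
      = (LINT y:{real_of_int n..<real_of_int n + 1}|lborel. \<bar>f y\<bar>)
        + (LINT y:{real_of_int (n+1)..<real_of_int (n+1) + 1}|lborel. \<bar>f y\<bar>)"
    using Ico_split_integral[of "real_of_int n" "real_of_int n + 1" "real_of_int n + 2" "\<lambda>y. \<bar>f y\<bar>", OF _ _ int_Ico_abs int_Ico_abs]
    by (simp add: add.assoc)
  have "(LINT y:{real_of_int n..<real_of_int n + 2}|lborel. \<bar>f y\<bar>) \<le> 4 * C"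
    unfolding s1 using L1_n[of n] L1_n[of "n+1"] by simp
  moreover have "(LINT y:{real_of_int n..<real_of_int n + 2}|lborel. \<bar>f y\<bar>)
     = (LINT y:{real_of_int n..<u}|lborel. \<bar>f y\<bar>) + ((LINT y:{u..<u+l}|lborel. \<bar>f y\<bar>)
       + (LINT y:{u+l..<real_of_int n + 2}|lborel. \<bar>f y\<bar>))"
  proof -
    have x1: "(LINT y:{real_of_int n..<real_of_int n + 2}|lborel. \<bar>f y\<bar>)
      = (LINT y:{real_of_int n..<u}|lborel. \<bar>f y\<bar>) + (LINT y:{u..<real_of_int n + 2}|lborel. \<bar>f y\<bar>)"
      by (rule Ico_split_integral[OF _ _ int_Ico_abs int_Ico_abs]) (use n in auto)
    have x2: "(LINT y:{u..<real_of_int n + 2}|lborel. \<bar>f y\<bar>)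
      = (LINT y:{u..<u+l}|lborel. \<bar>f y\<bar>) + (LINT y:{u+l..<real_of_int n + 2}|lborel. \<bar>f y\<bar>)"
      by (rule Ico_split_integral[OF _ _ int_Ico_abs int_Ico_abs]) (use n assms in auto)
    show ?thesis using x1 x2 by simp
  qed
  moreover have "0 \<le> (LINT y:{real_of_int n..<u}|lborel. \<bar>f y\<bar>)"
    "0 \<le> (LINT y:{u+l..<real_of_int n + 2}|lborel. \<bar>f y\<bar>)"
    unfolding set_lebesgue_integral_def by (auto intro!: integral_nonneg simp: indicator_def)
  ultimately show ?thesis by linarith
qed

end

definition K :: "real \<Rightarrow> nat" where "K l = (LEAST n. 1 / 2^(Suc n) < l)"

definition g :: "nat \<Rightarrow> real \<Rightarrow> real \<Rightarrow> real" where
  "g i l u = (if \<exists>m::int. u < real_of_int m / 2^i \<and> real_of_int m / 2^i < u + l then 1 else 0)"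

definition Hf :: "real \<Rightarrow> real \<Rightarrow> real" where "Hf l u = 5 + (\<Sum>i\<le>K l. g i l u)"

lemma ex_pow_small: "0 < a \<Longrightarrow> \<exists>n. 1 / 2^n < (a::real)"
proof -
  assume a: "0 < a"
  obtain n where "1 / a < 2^n" using real_arch_pow[of 2 "1/a"] by auto
  then have "1 / 2^n < a" using a by (simp add: divide_simps mult.commute)
  then show ?thesis by blast
qed

lemma K_props:
  assumes "0 < l" "l \<le> 1"
  shows "1 / 2^(Suc (K l)) < l" "l \<le> 1 / 2^(K l)"
proof -
  obtain n where n: "1 / 2^n < l" using ex_pow_small[OF assms(1)] by blast
  have "1 / 2^(Suc n) \<le> 1 / (2::real)^n" by (simp add: divide_simps)
  then have "1 / 2^(Suc n) < l" using n by linarith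
  then show k1: "1 / 2^(Suc (K l)) < l" unfolding K_def by (rule LeastI)
  show "l \<le> 1 / 2^(K l)"
  proof (cases "K l")
    case 0 then show ?thesis using assms by simp
  next
    case (Suc k)
    have "\<not> 1 / 2^(Suc k) < l"
      using not_less_Least[of k "\<lambda>n. 1 / 2^(Suc n) < l"] Suc unfolding K_def by simp
    then show ?thesis using Suc by simp
  qed
qed

lemma exist_level:
  fixes a :: real
  assumes "0 < a" "a \<le> 1 / 2^j"
  shows "\<exists>i\<ge>j. 1 / 2^(Suc i) < a \<and> a \<le> 1 / 2^i"
proof -
  obtain n where n: "1 / 2^n < a" using ex_pow_small[OF assms(1)] by blast
  define N where "N = (LEAST n. 1 / 2^n < (a::real))"
  have N: "1 / 2^N < a" unfolding N_def by (rule LeastI[of _ n], rule n)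
  have "1 / (2::real)^j \<le> 1" by (simp add: divide_simps)
  then have "N \<noteq> 0"
  proof -
    assume h: "1 / (2::real)^j \<le> 1"
    show "N \<noteq> 0"
    proof
      assume "N = 0"
      then have "1 < a" using N by simp
      then show False using h assms by linarith
    qed
  qed
  then obtain i where i: "N = Suc i" by (cases N) auto
  have "\<not> 1 / 2^i < a" using not_less_Least[of i "\<lambda>n. 1 / 2^n < a"] i unfolding N_def by simp
  then have ai: "a \<le> 1 / 2^i" by simp
  have "j \<le> i"
  proof (rule ccontr)
    assume "\<not> j \<le> i"
    then have "Suc i \<le> j" by simp
    then have "(2::real)^(Suc i) \<le> 2^j" by (rule power_increasing) simp
    then have "1 / 2^j \<le> 1 / (2::real)^(Suc i)" by (simp add: frac_le)
    then show False using N i assms(2) by simp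
  qed
  then show ?thesis using N i ai by auto
qed

lemma div_aux1: "((m::int) * 2^d - 1) div 2^d = m - 1"
proof -
  have e: "m * 2^d - 1 = (2^d - 1) + (m - 1) * 2^d" by (simp add: algebra_simps)
  have "(2^d - 1::int) div 2^d = 0" by (rule div_pos_pos_trivial) simp_all
  then show ?thesis unfolding e by simp
qed

lemma div_aux2: "((m::int) * 2^d) div 2^d = m"
  by simp

context perfun begin

lemma integral_dy: "(LINT y:dy k m|lborel. f y) = avg f (dy k m) / 2^k"
  unfolding avg_def measure_dy by simp

lemma parent:
  assumes "j = 0 \<or> odd m"
  shows "\<exists>\<Lambda>. (AE y in lborel. y \<in> {(real_of_int m - 1)/2^j ..< (real_of_int m + 1)/2^j} \<longrightarrow> \<Lambda> - C \<le> f y)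
     \<and> avg f (dy j (m-1)) \<le> \<Lambda> + C \<and> avg f (dy j m) \<le> \<Lambda> + C"
proof (cases j)
  case 0
  have A1: "AE y in lborel. y \<in> dy 0 (m-1) \<longrightarrow> 0 - C \<le> f y" using dyad[of 0 "m-1"] avg_dy0 by simp
  have A2: "AE y in lborel. y \<in> dy 0 m \<longrightarrow> 0 - C \<le> f y" using dyad[of 0 "m"] avg_dy0 by simp
  have "AE y in lborel. y \<in> {(real_of_int m - 1)/2^j ..< (real_of_int m + 1)/2^j} \<longrightarrow> 0 - C \<le> f y"
    using A1 A2 unfolding 0 dy_def by eventually_elim auto
  then show ?thesis using avg_dy0 Cnn 0 by (intro exI[of _ 0]) simp
next
  case (Suc j')
  then have "odd m" using assms by simp
  then obtain q where m: "m = 2 * q + 1" by (metis oddE)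
  have e1: "real_of_int q / 2^j' = (real_of_int m - 1)/2^j" unfolding m Suc by (simp add: field_simps)
  have e2: "(real_of_int q + 1) / 2^j' = (real_of_int m + 1)/2^j" unfolding m Suc by (simp add: field_simps)
  have A: "AE y in lborel. y \<in> {(real_of_int m - 1)/2^j ..< (real_of_int m + 1)/2^j} \<longrightarrow> avg f (dy j' q) - C \<le> f y"
    using dyad[of j' q] unfolding dy_def e1 e2 .
  have c1: "avg f (dy j (m-1)) \<le> avg f (dy j' q) + C"
    using child_le[of j' "m-1"] unfolding Suc m by simp
  have c2: "avg f (dy j m) \<le> avg f (dy j' q) + C"
    using child_le[of j' "m"] unfolding Suc m by simp
  show ?thesis using A c1 c2 by blast
qed

lemma leftside:
  assumes "real_of_int m / 2^j - 1/2^j \<le> u" "u < real_of_int m / 2^j"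
  shows "\<exists>i\<ge>j. 1/2^(Suc i) < real_of_int m / 2^j - u \<and> real_of_int m / 2^j - u \<le> 1/2^i \<and>
     (LINT y:{u..<real_of_int m / 2^j}|lborel. f y) \<le> (real_of_int m / 2^j - u) * (avg f (dy j (m-1)) + real (i-j) * C + C)"
proof -
  define p where "p = real_of_int m / 2^j"
  define a where "a = p - u"
  have a0: "0 < a" "a \<le> 1/2^j" using assms unfolding a_def p_def by auto
  obtain i where i: "j \<le> i" "1/2^(Suc i) < a" "a \<le> 1/2^i" using exist_level[OF a0] by blast
  define d where "d = i - j"
  define s where "s = (1::real)/2^i"
  have ijd: "i = j + d" unfolding d_def using i by simp
  have pw: "(2::real)^i = 2^j * 2^d" unfolding ijd by (simp add: power_add)
  have l1: "real_of_int (m * 2^d - 1) / 2^i = p - s" unfolding p_def s_def pw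
    by (simp add: field_simps)
  have l2: "(real_of_int (m * 2^d - 1) + 1) / 2^i = p" unfolding p_def pw
    by (simp add: field_simps)
  have IA: "dy i (m * 2^d - 1) = {p - s..<p}" unfolding dy_def l1 l2 ..
  define v where "v = avg f (dy i (m * 2^d - 1))"
  have vch: "v \<le> avg f (dy j (m-1)) + real d * C"
    using chain[of j d "m * 2^d - 1"] unfolding v_def ijd[symmetric] div_aux1 .
  have ae: "AE y in lborel. y \<in> {p - s..<p} \<longrightarrow> v - C \<le> f y"
    using dyad[of i "m * 2^d - 1"] unfolding IA v_def .
  have sa: "p - s \<le> u" "s < 2 * a" using i unfolding s_def a_def by (auto simp: field_simps)
  have tot: "(LINT y:{p - s..<p}|lborel. f y) = s * v"
    using integral_dy[of i "m * 2^d - 1"] unfolding IA v_def s_def by simp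
  have spl: "(LINT y:{p - s..<p}|lborel. f y) = (LINT y:{p - s..<u}|lborel. f y) + (LINT y:{u..<p}|lborel. f y)"
    by (rule Ico_split_integral[OF _ _ int_Ico int_Ico]) (use sa a0 a_def in auto)
  have lb: "(u - (p - s)) * (v - C) \<le> (LINT y:{p - s..<u}|lborel. f y)"
    by (rule int_lb[OF int_Ico]) (use sa AE_sub[OF ae, of "{p-s..<u}"] a0 a_def in auto)
  have "(LINT y:{u..<p}|lborel. f y) \<le> s * v - (u - (p - s)) * (v - C)"
    using tot spl lb by linarith
  also have "\<dots> = a * v + (s - a) * C" unfolding a_def by (simp add: algebra_simps)
  also have "\<dots> \<le> a * v + a * C" using sa Cnn by (simp add: mult_right_mono)
  also have "\<dots> \<le> a * (avg f (dy j (m-1)) + real d * C + C)"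
    using mult_left_mono[OF vch, of a] a0 by (simp add: distrib_left)
  finally show ?thesis using i unfolding a_def p_def d_def by blast
qed

lemma rightside:
  assumes "real_of_int m / 2^j < w" "w \<le> real_of_int m / 2^j + 1/2^j"
  shows "\<exists>i\<ge>j. 1/2^(Suc i) < w - real_of_int m / 2^j \<and> w - real_of_int m / 2^j \<le> 1/2^i \<and>
     (LINT y:{real_of_int m / 2^j..<w}|lborel. f y) \<le> (w - real_of_int m / 2^j) * (avg f (dy j m) + real (i-j) * C + C)"
proof -
  define p where "p = real_of_int m / 2^j"
  define b where "b = w - p"
  have b0: "0 < b" "b \<le> 1/2^j" using assms unfolding b_def p_def by auto
  obtain i where i: "j \<le> i" "1/2^(Suc i) < b" "b \<le> 1/2^i" using exist_level[OF b0] by blast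
  define d where "d = i - j"
  define s where "s = (1::real)/2^i"
  have ijd: "i = j + d" unfolding d_def using i by simp
  have pw: "(2::real)^i = 2^j * 2^d" unfolding ijd by (simp add: power_add)
  have l1: "real_of_int (m * 2^d) / 2^i = p" unfolding p_def pw
    by (simp add: field_simps)
  have l2: "(real_of_int (m * 2^d) + 1) / 2^i = p + s" unfolding p_def s_def pw
    by (simp add: field_simps)
  have IB: "dy i (m * 2^d) = {p..<p + s}" unfolding dy_def l1 l2 ..
  define v where "v = avg f (dy i (m * 2^d))"
  have vch: "v \<le> avg f (dy j m) + real d * C"
    using chain[of j d "m * 2^d"] unfolding v_def ijd[symmetric] div_aux2 .
  have ae: "AE y in lborel. y \<in> {p..<p + s} \<longrightarrow> v - C \<le> f y"
    using dyad[of i "m * 2^d"] unfolding IB v_def .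
  have sa: "w \<le> p + s" "s < 2 * b" using i unfolding s_def b_def by (auto simp: field_simps)
  have tot: "(LINT y:{p..<p + s}|lborel. f y) = s * v"
    using integral_dy[of i "m * 2^d"] unfolding IB v_def s_def by simp
  have spl: "(LINT y:{p..<p + s}|lborel. f y) = (LINT y:{p..<w}|lborel. f y) + (LINT y:{w..<p + s}|lborel. f y)"
    by (rule Ico_split_integral[OF _ _ int_Ico int_Ico]) (use sa b0 b_def in auto)
  have lb: "(p + s - w) * (v - C) \<le> (LINT y:{w..<p + s}|lborel. f y)"
    by (rule int_lb[OF int_Ico]) (use sa AE_sub[OF ae, of "{w..<p + s}"] b0 b_def in auto)
  have "(LINT y:{p..<w}|lborel. f y) \<le> s * v - (p + s - w) * (v - C)"
    using tot spl lb by linarith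
  also have "\<dots> = b * v + (s - b) * C" unfolding b_def by (simp add: algebra_simps)
  also have "\<dots> \<le> b * v + b * C" using sa Cnn by (simp add: mult_right_mono)
  also have "\<dots> \<le> b * (avg f (dy j m) + real d * C + C)"
    using mult_left_mono[OF vch, of b] b0 by (simp add: distrib_left)
  finally show ?thesis using i unfolding b_def p_def d_def by blast
qed

end

lemma two_pow_ge: "1 \<le> d \<Longrightarrow> 2 * d \<le> (2::nat)^d"
proof (induction d)
  case 0 then show ?case by simp
next
  case (Suc d)
  show ?case
  proof (cases "d = 0")
    case True then show ?thesis by simp
  next
    case False
    then have "2 * d \<le> 2^d" using Suc by simp
    moreover have "(2::nat)^1 \<le> 2^d" using False by (intro power_increasing) auto
    ultimately show ?thesis by simp
  qed
qed

lemma key_a: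
  fixes a l :: real
  assumes "0 < a" "a \<le> 1/2^i" "1/2^(Suc k) < l"
  shows "a * (real i - real k) \<le> l"
proof (cases "i \<le> k")
  case True
  then have "a * (real i - real k) \<le> 0" using assms(1) by (simp add: mult_nonneg_nonpos)
  moreover have "0 < l" using assms(3) by (smt (verit) divide_pos_pos zero_less_power)
  ultimately show ?thesis by linarith
next
  case False
  define d where "d = i - k"
  have d: "1 \<le> d" "i = k + d" unfolding d_def using False by auto
  have "real (2 * d) \<le> real ((2::nat)^d)" using two_pow_ge[OF d(1)] by linarith
  then have dd: "2 * real d \<le> 2^d" by simp
  have "a * (real i - real k) = a * real d" using d by simp
  also have "\<dots> \<le> (1/2^i) * real d" using mult_right_mono[OF assms(2), of "real d"] by simp
  also have "\<dots> = real d / (2^k * 2^d)" unfolding d(2) by (simp add: power_add)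
  also have "\<dots> \<le> 1 / 2^(Suc k)"
    using dd by (simp add: divide_simps)
  finally show ?thesis using assms(3) by linarith
qed

lemma g_nonneg: "0 \<le> g i l u" unfolding g_def by simp

context perfun begin

lemma core:
  assumes l: "0 < l" "l \<le> 1"
  shows "AE y in lborel. y \<in> {u..<u+l} \<longrightarrow> avg f {u..<u+l} - C * Hf l u \<le> f y"
proof -
  define Kl where "Kl = K l"
  have K1: "1/2^(Suc Kl) < l" "l \<le> 1/2^Kl" using K_props[OF l] unfolding Kl_def by auto
  define P where "P n \<longleftrightarrow> (\<exists>m::int. u < real_of_int m / 2^n \<and> real_of_int m / 2^n < u + l)" for n
  have PK: "P (Suc Kl)"
  proof -
    define N where "N = Suc Kl"
    define m where "m = \<lfloor>u * 2^N\<rfloor> + 1"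
    have "u * 2^N < real_of_int m" unfolding m_def by linarith
    then have m1: "u < real_of_int m / 2^N" by (simp add: divide_simps)
    have "real_of_int m \<le> u * 2^N + 1" unfolding m_def by linarith
    then have "real_of_int m / 2^N \<le> u + 1/2^N" by (simp add: divide_simps)
    then have m2: "real_of_int m / 2^N < u + l" using K1 unfolding N_def by linarith
    show ?thesis unfolding P_def N_def[symmetric] using m1 m2 by blast
  qed
  define j where "j = (LEAST n. P n)"
  have Pj: "P j" unfolding j_def by (rule LeastI[of P "Suc Kl", OF PK])
  have jle: "j \<le> Suc Kl" unfolding j_def by (rule Least_le[of P, OF PK])
  have notP: "\<And>n. n < j \<Longrightarrow> \<not> P n" unfolding j_def by (rule not_less_Least)
  obtain m where m: "u < real_of_int m / 2^j" "real_of_int m / 2^j < u + l"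
    using Pj unfolding P_def by blast
  define p where "p = real_of_int m / 2^j"
  define e where "e = (1::real) / 2^j"
  have pe1: "(real_of_int m - 1) / 2^j = p - e" unfolding p_def e_def by (simp add: diff_divide_distrib)
  have pe2: "(real_of_int m + 1) / 2^j = p + e" unfolding p_def e_def by (simp add: add_divide_distrib)
  have lohi: "p - e \<le> u \<and> u + l \<le> p + e \<and> (j = 0 \<or> odd m)"
  proof (cases j)
    case 0
    then have pe: "e = 1" "p = real_of_int m" unfolding e_def p_def by auto
    have "p - e \<le> u"
    proof (rule ccontr)
      assume "\<not> p - e \<le> u"
      then show False using m l pe unfolding p_def by simp
    qed
    moreover have "u + l \<le> p + e"
    proof (rule ccontr)
      assume "\<not> u + l \<le> p + e"
      then show False using m l pe unfolding p_def by simp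
    qed
    ultimately show ?thesis using 0 by simp
  next
    case (Suc j')
    have jj: "j' < j" using Suc by simp
    have pw: "(2::real)^j = 2 * 2^j'" using Suc by simp
    have om: "odd m"
    proof
      assume "even m"
      then obtain q where q: "m = 2 * q" by blast
      have "real_of_int q / 2^j' = p" unfolding p_def q pw by simp
      then have "P j'" unfolding P_def using m p_def by metis
      then show False using notP[OF jj] by simp
    qed
    then obtain q where q: "m = 2 * q + 1" by (metis oddE)
    have "p - e \<le> u"
    proof (rule ccontr)
      assume h: "\<not> p - e \<le> u"
      have "real_of_int q / 2^j' = p - e" unfolding pe1[symmetric] q pw by simp
      moreover have "p - e < u + l" using m unfolding p_def e_def by (simp add: divide_simps)
      ultimately have "P j'" unfolding P_def using h by (metis not_le)
      then show False using notP[OF jj] by simp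
    qed
    moreover have "u + l \<le> p + e"
    proof (rule ccontr)
      assume h: "\<not> u + l \<le> p + e"
      have "real_of_int (q + 1) / 2^j' = p + e" unfolding pe2[symmetric] q pw by (simp add: field_simps)
      moreover have "u < p + e" using m unfolding p_def e_def by (simp add: divide_simps)
      ultimately have "P j'" unfolding P_def using h by (metis not_le)
      then show False using notP[OF jj] by simp
    qed
    ultimately show ?thesis using om by simp
  qed
  obtain \<Lambda> where Lam: "AE y in lborel. y \<in> {p - e ..< p + e} \<longrightarrow> \<Lambda> - C \<le> f y"
    "avg f (dy j (m-1)) \<le> \<Lambda> + C" "avg f (dy j m) \<le> \<Lambda> + C"
    using parent[of j m] lohi unfolding pe1 pe2 by blast
  obtain iA where iA: "iA \<ge> j" "1/2^(Suc iA) < p - u" "p - u \<le> 1/2^iA"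
    "(LINT y:{u..<p}|lborel. f y) \<le> (p - u) * (avg f (dy j (m-1)) + real (iA-j) * C + C)"
    using leftside[of m j u] lohi m unfolding p_def e_def by auto
  obtain iB where iB: "iB \<ge> j" "1/2^(Suc iB) < u + l - p" "u + l - p \<le> 1/2^iB"
    "(LINT y:{p..<u+l}|lborel. f y) \<le> (u + l - p) * (avg f (dy j m) + real (iB-j) * C + C)"
    using rightside[of m j "u+l"] lohi m unfolding p_def e_def by auto
  define a where "a = p - u"
  define b where "b = u + l - p"
  have ab: "0 < a" "0 < b" "a + b = l" using m unfolding a_def b_def p_def by auto
  have tot: "(LINT y:{u..<u+l}|lborel. f y) = (LINT y:{u..<p}|lborel. f y) + (LINT y:{p..<u+l}|lborel. f y)"
    by (rule Ico_split_integral[OF _ _ int_Ico int_Ico]) (use m p_def in auto)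
  have A1: "(LINT y:{u..<p}|lborel. f y) \<le> a * \<Lambda> + C * (a * (real iA - real j + 2))"
  proof -
    have "avg f (dy j (m-1)) + real (iA-j) * C + C \<le> \<Lambda> + C * (real iA - real j + 2)"
      using Lam(2) iA(1) by (simp add: of_nat_diff algebra_simps)
    then have "a * (avg f (dy j (m-1)) + real (iA-j) * C + C) \<le> a * (\<Lambda> + C * (real iA - real j + 2))"
      using ab by (simp add: mult_left_mono)
    then show ?thesis using iA(4) unfolding a_def by (simp add: algebra_simps)
  qed
  have B1: "(LINT y:{p..<u+l}|lborel. f y) \<le> b * \<Lambda> + C * (b * (real iB - real j + 2))"
  proof -
    have "avg f (dy j m) + real (iB-j) * C + C \<le> \<Lambda> + C * (real iB - real j + 2)"
      using Lam(3) iB(1) by (simp add: of_nat_diff algebra_simps)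
    then have "b * (avg f (dy j m) + real (iB-j) * C + C) \<le> b * (\<Lambda> + C * (real iB - real j + 2))"
      using ab by (simp add: mult_left_mono)
    then show ?thesis using iB(4) unfolding b_def by (simp add: algebra_simps)
  qed
  have ka: "a * (real iA - real Kl) \<le> l" by (rule key_a) (use ab iA K1 a_def in auto)
  have kb: "b * (real iB - real Kl) \<le> l" by (rule key_a) (use ab iB K1 b_def in auto)
  have "a * (real iA - real j + 2) + b * (real iB - real j + 2)
      = a * (real iA - real Kl) + b * (real iB - real Kl) + (a + b) * (real Kl - real j + 2)"
    by (simp add: algebra_simps)
  also have "\<dots> \<le> l + l + l * (real Kl - real j + 2)" using ka kb ab by simp
  finally have sumb: "a * (real iA - real j + 2) + b * (real iB - real j + 2) \<le> l * (real Kl - real j + 4)"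
    by (simp add: algebra_simps)
  have "(LINT y:{u..<u+l}|lborel. f y) \<le> l * \<Lambda> + C * (l * (real Kl - real j + 4))"
  proof -
    have "(LINT y:{u..<u+l}|lborel. f y) \<le> (a + b) * \<Lambda> + C * (a * (real iA - real j + 2) + b * (real iB - real j + 2))"
      using tot A1 B1 by (simp add: algebra_simps)
    also have "\<dots> \<le> l * \<Lambda> + C * (l * (real Kl - real j + 4))"
      using mult_left_mono[OF sumb Cnn] ab by simp
    finally show ?thesis .
  qed
  then have avgb: "avg f {u..<u+l} \<le> \<Lambda> + C * (real Kl - real j + 4)"
    using l by (simp add: avg_Ico divide_simps algebra_simps)
  have gone: "\<And>i. j \<le> i \<Longrightarrow> g i l u = 1"
  proof -
    fix i assume ji: "j \<le> i"
    define d where "d = i - j"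
    have pw: "(2::real)^i = 2^j * 2^d" unfolding d_def using ji by (simp add: power_add[symmetric])
    have "real_of_int (m * 2^d) / 2^i = p" unfolding p_def pw by simp
    then show "g i l u = 1" unfolding g_def using m p_def by (metis (no_types, lifting))
  qed
  have sumg: "real Kl - real j \<le> (\<Sum>i\<le>Kl. g i l u)"
  proof -
    have "(\<Sum>i\<in>{j..Kl}. g i l u) \<le> (\<Sum>i\<le>Kl. g i l u)"
      by (rule sum_mono2) (auto simp: g_nonneg)
    moreover have "(\<Sum>i\<in>{j..Kl}. g i l u) = real (Suc Kl - j)" using gone by simp
    moreover have "real Kl - real j \<le> real (Suc Kl - j)" using jle by linarith
    ultimately show ?thesis by linarith
  qed
  have Hb: "avg f {u..<u+l} - C * Hf l u \<le> \<Lambda> - C"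
  proof -
    have "C * (real Kl - real j) \<le> C * (\<Sum>i\<le>Kl. g i l u)" using sumg Cnn by (simp add: mult_left_mono)
    then show ?thesis using avgb unfolding Hf_def Kl_def[symmetric] by (simp add: algebra_simps)
  qed
  have sub: "{u..<u+l} \<subseteq> {p - e..<p + e}" using lohi by auto
  show ?thesis using AE_sub[OF Lam(1) sub] Hb by (auto elim!: AE_mp)
qed

end

lemma g_eq: "g i l = indicator (\<Union>m::int. {real_of_int m/2^i - l <..< real_of_int m/2^i})"
  apply (auto simp: g_def indicator_def fun_eq_iff)
  subgoal for x m by (rule exI[of _ m]) linarith
  done

lemma g_meas[measurable]: "g i l \<in> borel_measurable borel"
proof -
  have "(\<Union>m::int. {real_of_int m/2^i - l <..< real_of_int m/2^i}) \<in> sets borel"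
    by (rule borel_open) (auto intro!: open_UN)
  then show ?thesis unfolding g_eq by simp
qed

lemma Hf_meas[measurable]: "Hf l \<in> borel_measurable borel"
  unfolding Hf_def by measurable

lemma int_bdd:
  fixes h :: "real \<Rightarrow> real"
  assumes "h \<in> borel_measurable borel" "\<And>t. t \<in> {0..1} \<Longrightarrow> \<bar>h t\<bar> \<le> B"
  shows "integrable lborel (\<lambda>t. indicator {0..1} t * h t)"
proof -
  have i1: "integrable lborel (\<lambda>t. B * indicator {0..1::real} t)"
    by (intro integrable_mult_right integrable_real_indicator) auto
  show ?thesis
    by (rule Bochner_Integration.integrable_bound[OF i1])
      (use assms in \<open>auto simp: indicator_def intro!: AE_I2 intro: order_trans[OF _ abs_ge_self]\<close>)
qed

lemma g_le1: "g i l u \<le> 1" unfolding g_def by simp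

lemma g_int_bound:
  assumes l: "0 < l" "l \<le> 1"
  shows "(\<integral>t. indicator {0..1} t * g i l (a + t) \<partial>lborel) \<le> 2^(Suc i) * l"
proof -
  define M0 where "M0 = \<lfloor>a * 2^i\<rfloor>"
  define M where "M = {M0 + 1 .. M0 + 2^(Suc i)}"
  define J where "J m = {real_of_int m / 2^i - l - a <..< real_of_int m / 2^i - a}" for m :: int
  have pt: "indicator {0..1} t * g i l (a + t) \<le> (\<Sum>m\<in>M. indicator (J m) t)" for t
  proof (cases "t \<in> {0..1} \<and> g i l (a + t) = 1")
    case True
    then obtain m :: int where m: "a + t < real_of_int m / 2^i" "real_of_int m / 2^i < a + t + l"
      unfolding g_def by (auto split: if_splits)
    have t: "0 \<le> t" "t \<le> 1" using True by auto
    have "(a + t) * 2^i < real_of_int m" using m(1) by (simp add: divide_simps)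
    moreover have "a * 2^i \<le> (a + t) * 2^i" using t by (intro mult_right_mono) auto
    ultimately have "a * 2^i < real_of_int m" by linarith
    then have m1: "M0 + 1 \<le> m" unfolding M0_def by linarith
    have "real_of_int m < (a + t + l) * 2^i" using m(2) by (simp add: divide_simps)
    also have "\<dots> \<le> (a + 2) * 2^i" using t l by (intro mult_right_mono) auto
    finally have "real_of_int m < a * 2^i + 2^(Suc i)" by (simp add: algebra_simps)
    moreover have "real_of_int (M0 + 2^(Suc i)) = real_of_int M0 + 2^(Suc i)" by simp
    moreover have "a * 2^i < real_of_int M0 + 1" unfolding M0_def by linarith
    ultimately have "real_of_int m < real_of_int (M0 + 2^(Suc i) + 1)" by simp
    then have m2: "m \<le> M0 + 2^(Suc i)" by (simp only: of_int_less_iff)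
    have mM: "m \<in> M" unfolding M_def using m1 m2 by simp
    have "t \<in> J m" unfolding J_def using m by auto
    then have "1 \<le> (indicator (J m) t :: real)" by simp
    also have "\<dots> \<le> (\<Sum>m\<in>M. indicator (J m) t)"
      by (rule member_le_sum[OF mM]) (auto simp: M_def)
    finally show ?thesis using True by simp
  next
    case False
    then have "indicator {0..1} t * g i l (a + t) = 0" unfolding g_def by (auto simp: indicator_def split: if_splits)
    moreover have "0 \<le> (\<Sum>m\<in>M. indicator (J m) t :: real)" by (auto intro!: sum_nonneg)
    ultimately show ?thesis by linarith
  qed
  have intJ: "integrable lborel (indicator (J m) :: real \<Rightarrow> real)" for m
    unfolding J_def by (intro integrable_real_indicator) (use l in \<open>auto simp: emeasure_lborel_Ioo\<close>)
  have "(\<integral>t. indicator {0..1} t * g i l (a + t) \<partial>lborel) \<le> (\<integral>t. (\<Sum>m\<in>M. indicator (J m) t) \<partial>lborel)"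
    apply (rule integral_mono)
      apply (rule int_bdd[where B=1])
       apply measurable
      apply (simp add: g_le1 abs_of_nonneg g_nonneg)
     apply (rule Bochner_Integration.integrable_sum, rule intJ)
    by (rule pt)
  also have "\<dots> = (\<Sum>m\<in>M. l)"
    apply (subst Bochner_Integration.integral_sum)
     apply (rule intJ)
    using l by (auto simp: J_def)
  also have "\<dots> = 2^(Suc i) * l"
    unfolding M_def by (simp add: nat_power_eq)
  finally show ?thesis .
qed

lemma geo_sum: "(\<Sum>i\<le>k. (2::real)^(Suc i)) = 2^(Suc (Suc k)) - 2"
  by (induction k) auto

lemma H_int:
  assumes l: "0 < l" "l \<le> 1"
  shows "integrable lborel (\<lambda>t. indicator {0..1} t * Hf l (a + t))"
    "(\<integral>t. indicator {0..1} t * Hf l (a + t) \<partial>lborel) \<le> 9"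
proof -
  have gi: "integrable lborel (\<lambda>t. indicator {0..1} t * g i l (a + t))" for i
    by (rule int_bdd[where B=1]) (auto simp: g_le1 abs_of_nonneg g_nonneg)
  have ci: "integrable lborel (\<lambda>t. indicator {0..1::real} t * (5::real))"
    by (intro integrable_mult_left integrable_real_indicator) auto
  have eq: "(\<lambda>t. indicator {0..1} t * Hf l (a + t)) =
     (\<lambda>t. indicator {0..1::real} t * (5::real) + (\<Sum>i\<le>K l. indicator {0..1} t * g i l (a + t)))"
    unfolding Hf_def by (auto simp: fun_eq_iff distrib_left sum_distrib_left)
  show "integrable lborel (\<lambda>t. indicator {0..1} t * Hf l (a + t))"
    unfolding eq by (rule Bochner_Integration.integrable_add[OF ci Bochner_Integration.integrable_sum]) (rule gi)
  have "(\<integral>t. indicator {0..1} t * Hf l (a + t) \<partial>lborel)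
     = 5 + (\<Sum>i\<le>K l. (\<integral>t. indicator {0..1} t * g i l (a + t) \<partial>lborel))"
    unfolding eq
    apply (subst Bochner_Integration.integral_add[OF ci Bochner_Integration.integrable_sum[OF gi]])
    apply (subst Bochner_Integration.integral_sum[OF gi])
    by simp
  also have "\<dots> \<le> 5 + (\<Sum>i\<le>K l. 2^(Suc i) * l)"
    using g_int_bound[OF l] by (intro add_left_mono sum_mono) auto
  also have "(\<Sum>i\<le>K l. 2^(Suc i) * l) = (2^(Suc (Suc (K l))) - 2) * l"
    by (subst sum_distrib_right[symmetric], subst geo_sum, rule refl)
  also have "\<dots> \<le> 4 * (2^K l * l)"
    using l by (simp add: algebra_simps)
  also have "2^K l * l \<le> 1"
    using K_props(2)[OF l] by (simp add: divide_simps mult.commute)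
  finally show "(\<integral>t. indicator {0..1} t * Hf l (a + t) \<partial>lborel) \<le> 9" by simp
qed

definition adm0 :: "(real \<Rightarrow> real \<Rightarrow> real) \<Rightarrow> bool" where
  "adm0 \<phi> \<longleftrightarrow> (\<lambda>(t, x). \<phi> t x) \<in> borel_measurable (restrict_space (lborel \<Otimes>\<^sub>M lborel) ({0..1} \<times> {0..<1})) \<and>
     (\<forall>t\<in>{0..1}. set_integrable lborel {0..<1} (\<phi> t) \<and> (LINT x:{0..<1}|lborel. \<phi> t x) = 0)"

definition dyadAE :: "(real \<Rightarrow> real \<Rightarrow> real) \<Rightarrow> real \<Rightarrow> bool" where
  "dyadAE \<phi> C \<longleftrightarrow> (\<forall>t\<in>{0..1}. \<forall>k (j::nat). j < 2^k \<longrightarrow>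
     (AE y in lborel. y \<in> dy k (int j) \<longrightarrow> avg (\<phi> t) (dy k (int j)) - C \<le> \<phi> t y))"

lemma frac_in: "frac y \<in> {0..<1}"
  by (simp add: frac_lt_1)

lemma dy_sub01: "j < 2^k \<Longrightarrow> dy k (int j) \<subseteq> {0..<1}"
proof -
  assume j: "j < 2^k"
  then have "real j + 1 \<le> 2^k" by (metis Suc_leI of_nat_Suc of_nat_le_iff of_nat_numeral of_nat_power add.commute)
  then have "(real j + 1) / 2^k \<le> 1" by (simp add: divide_simps)
  then show ?thesis unfolding dy_def by auto
qed

lemma perfun_of:
  assumes adm: "adm0 \<phi>" and dA: "dyadAE \<phi> C" and C: "0 \<le> C" and t: "t \<in> {0..1}"
  shows "perfun (\<lambda>y. \<phi> t (frac y)) C"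
proof
  have si: "set_integrable lborel {0..<1} (\<phi> t)" and m0: "(LINT x:{0..<1}|lborel. \<phi> t x) = 0"
    using adm t unfolding adm0_def by auto
  have mi: "(\<lambda>x. indicator {0..<1} x *\<^sub>R \<phi> t x) \<in> borel_measurable borel"
    using borel_measurable_integrable[OF si[unfolded set_integrable_def]] by simp
  have fm: "(\<lambda>x::real. frac x) \<in> borel_measurable borel" unfolding frac_def by measurable
  have "(\<lambda>y. (\<lambda>x. indicator {0..<1} x *\<^sub>R \<phi> t x) (frac y)) \<in> borel_measurable borel"
    by (rule measurable_compose[OF fm mi])
  moreover have "(\<lambda>y. (\<lambda>x. indicator {0..<1} x *\<^sub>R \<phi> t x) (frac y)) = (\<lambda>y. \<phi> t (frac y))"
    using frac_in by (auto simp: fun_eq_iff indicator_def)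
  ultimately show "(\<lambda>y. \<phi> t (frac y)) \<in> borel_measurable borel" by simp
  show "\<And>y. \<phi> t (frac (y + 1)) = \<phi> t (frac y)" by (simp add: frac_1_eq)
  show "set_integrable lborel {0..<1} (\<lambda>y. \<phi> t (frac y))"
    using si by (subst set_integrable_cong[where f'="\<phi> t"]) (auto simp: frac_eq)
  show "(LINT y:{0..<1}|lborel. \<phi> t (frac y)) = 0"
    using m0 by (subst set_lebesgue_integral_cong[where g="\<phi> t"]) (auto simp: frac_eq)
  show "0 \<le> C" by fact
  fix k and j :: nat assume j: "j < 2^k"
  have sub: "dy k (int j) \<subseteq> {0..<1}" by (rule dy_sub01[OF j])
  have eqf: "\<And>y. y \<in> dy k (int j) \<Longrightarrow> \<phi> t (frac y) = \<phi> t y" using sub by (auto simp: frac_eq)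
  have "avg (\<lambda>y. \<phi> t (frac y)) (dy k (int j)) = avg (\<phi> t) (dy k (int j))"
    unfolding avg_def using eqf by (subst set_lebesgue_integral_cong[where g="\<phi> t"]) (auto simp: dy_def)
  then show "AE y in lborel. y \<in> dy k (int j) \<longrightarrow> avg (\<lambda>y. \<phi> t (frac y)) (dy k (int j)) - C \<le> \<phi> t (frac y)"
    using dA t j eqf unfolding dyadAE_def by (auto elim!: AE_mp intro!: AE_I2)
qed

lemma frac_meas[measurable]: "(frac :: real \<Rightarrow> real) \<in> borel_measurable borel"
proof -
  have "(\<lambda>x::real. frac x) \<in> borel_measurable borel" unfolding frac_def by measurable
  then show ?thesis by simp
qed

definition H0 :: "(real \<Rightarrow> real \<Rightarrow> real) \<Rightarrow> real \<times> real \<Rightarrow> real" where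
  "H0 \<phi> z = (if z \<in> {0..1} \<times> {0..<1} then \<phi> (fst z) (snd z) else 0)"

definition GG :: "(real \<Rightarrow> real \<Rightarrow> real) \<Rightarrow> real \<Rightarrow> real \<Rightarrow> real" where
  "GG \<phi> t y = H0 \<phi> (t, frac y)"

lemma GG_eq: "t \<in> {0..1} \<Longrightarrow> GG \<phi> t y = \<phi> t (frac y)"
  unfolding GG_def H0_def using frac_in[of y] by auto

lemma H0_meas:
  assumes "adm0 \<phi>"
  shows "H0 \<phi> \<in> borel_measurable (lborel \<Otimes>\<^sub>M lborel)"
proof -
  have m: "(\<lambda>(t, x). \<phi> t x) \<in> borel_measurable (restrict_space (lborel \<Otimes>\<^sub>M lborel) ({0..1} \<times> {0..<1}))"
    using assms unfolding adm0_def by simp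
  have "(\<lambda>z. if z \<in> {0..1::real} \<times> {0..<1::real} then (\<lambda>(t, x). \<phi> t x) z else 0) \<in> borel_measurable (lborel \<Otimes>\<^sub>M lborel)"
    using m by (subst (asm) measurable_restrict_space_iff) auto
  moreover have "(\<lambda>z. if z \<in> {0..1::real} \<times> {0..<1::real} then (\<lambda>(t, x). \<phi> t x) z else 0) = H0 \<phi>"
    unfolding H0_def by (auto simp: fun_eq_iff split: prod.splits)
  ultimately show ?thesis by simp
qed

lemma GG_meas:
  assumes "adm0 \<phi>"
  shows "(\<lambda>(t, y). GG \<phi> t y) \<in> borel_measurable (lborel \<Otimes>\<^sub>M lborel)"
proof -
  have "(\<lambda>z. (fst z, frac (snd z))) \<in> (lborel \<Otimes>\<^sub>M lborel) \<rightarrow>\<^sub>M (lborel \<Otimes>\<^sub>M lborel :: (real \<times> real) measure)"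
    by measurable
  from measurable_compose[OF this H0_meas[OF assms]]
  show ?thesis unfolding GG_def by (simp add: case_prod_beta')
qed

locale fam =
  fixes \<phi> :: "real \<Rightarrow> real \<Rightarrow> real" and C :: real
  assumes adm: "adm0 \<phi>" and dA: "dyadAE \<phi> C" and Cnn: "0 \<le> C"
begin

lemma Gm[measurable]: "(\<lambda>(t, y). GG \<phi> t y) \<in> borel_measurable (lborel \<Otimes>\<^sub>M lborel)"
  using GG_meas[OF adm] .

lemma pf: "t \<in> {0..1} \<Longrightarrow> perfun (\<lambda>y. \<phi> t (frac y)) C"
  using perfun_of[OF adm dA Cnn] .

definition FF :: "real \<Rightarrow> real \<Rightarrow> real \<Rightarrow> real \<Rightarrow> real" where
  "FF a l t x = indicator {0..1} t * (indicator {a..<a+l} x * GG \<phi> t (x + t))"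

lemma FF_meas[measurable]: "(\<lambda>(t, x). FF a l t x) \<in> borel_measurable (lborel \<Otimes>\<^sub>M lborel)"
  unfolding FF_def by measurable

lemma FF_in: "t \<in> {0..1} \<Longrightarrow> FF a l t x = indicator {a..<a+l} x * \<phi> t (frac (x + t))"
  unfolding FF_def by (simp add: GG_eq)

lemma FF_out: "t \<notin> {0..1} \<Longrightarrow> FF a l t x = 0"
  unfolding FF_def by simp

lemma FF_int_x: "integrable lborel (\<lambda>x. FF a l t x)"
proof (cases "t \<in> {0..1}")
  case True
  interpret P: perfun "\<lambda>y. \<phi> t (frac y)" C using pf[OF True] .
  have "set_integrable lborel {a + t..<a + l + t} (\<lambda>y. \<phi> t (frac y))" by (rule P.int_Ico)
  then have "set_integrable lborel {a..<a+l} (\<lambda>x. \<phi> t (frac (x + t)))"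
    unfolding shift_set_integrable .
  then show ?thesis unfolding set_integrable_def using FF_in[OF True] by simp
next
  case False
  then show ?thesis using FF_out by simp
qed

lemma FF_norm_bound:
  assumes l: "0 < l" "l \<le> 1"
  shows "(\<integral>x. norm (FF a l t x) \<partial>lborel) \<le> 4 * C * indicator {0..1} t"
proof (cases "t \<in> {0..1}")
  case True
  interpret P: perfun "\<lambda>y. \<phi> t (frac y)" C using pf[OF True] .
  have "(\<integral>x. norm (FF a l t x) \<partial>lborel) = (LINT x:{a..<a+l}|lborel. \<bar>\<phi> t (frac (x + t))\<bar>)"
    unfolding set_lebesgue_integral_def using FF_in[OF True]
    by (intro Bochner_Integration.integral_cong) (auto simp: indicator_def)
  also have "\<dots> = (LINT y:{a + t..<a + l + t}|lborel. \<bar>\<phi> t (frac y)\<bar>)"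
    by (rule shift_set_integral[symmetric])
  also have "a + l + t = a + t + l" by simp
  also have "(LINT y:{a + t..<a + t + l}|lborel. \<bar>\<phi> t (frac y)\<bar>) \<le> 4 * C"
    by (rule P.L1_bound) (use l in auto)
  finally show ?thesis using True by simp
next
  case False
  then show ?thesis using FF_out by simp
qed

lemma FF_integrable:
  assumes l: "0 < l" "l \<le> 1"
  shows "integrable (lborel \<Otimes>\<^sub>M lborel) (\<lambda>(t, x). FF a l t x)"
proof (rule lborel_pair.Fubini_integrable)
  show "(\<lambda>(t, x). FF a l t x) \<in> borel_measurable (lborel \<Otimes>\<^sub>M lborel)" by measurable
  show "AE t in lborel. integrable lborel (\<lambda>x. (\<lambda>(t, x). FF a l t x) (t, x))"
    using FF_int_x by simp
  have mm: "(\<lambda>t. \<integral>x. norm ((\<lambda>(t, x). FF a l t x) (t, x)) \<partial>lborel) \<in> borel_measurable lborel"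
    by (rule lborel.borel_measurable_lebesgue_integral) simp
  have ii: "integrable lborel (\<lambda>t. 4 * C * indicator {0..1::real} t)"
    by (intro integrable_mult_right integrable_real_indicator) auto
  show "integrable lborel (\<lambda>t. \<integral>x. norm ((\<lambda>(t, x). FF a l t x) (t, x)) \<partial>lborel)"
  proof (rule Bochner_Integration.integrable_bound[OF ii mm])
    show "AE t in lborel. norm (\<integral>x. norm ((\<lambda>(t, x). FF a l t x) (t, x)) \<partial>lborel) \<le> norm (4 * C * indicator {0..1::real} t)"
    proof (intro AE_I2)
      fix t
      have "0 \<le> (\<integral>x. norm (FF a l t x) \<partial>lborel)" by simp
      then show "norm (\<integral>x. norm ((\<lambda>(t, x). FF a l t x) (t, x)) \<partial>lborel) \<le> norm (4 * C * indicator {0..1::real} t)"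
        using FF_norm_bound[OF l, of a t] Cnn by (simp add: indicator_def)
    qed
  qed
qed

end

lemma ind_shift2: "indicator {a+t..<a+t+l} (y::real) = (indicator {a..<a+l} (y - t) :: real)"
  by (simp add: indicator_def algebra_simps)

context fam begin

definition AA :: "real \<Rightarrow> real \<Rightarrow> real \<Rightarrow> real" where
  "AA a l t = (\<integral>y. indicator {a..<a+l} (y - t) * GG \<phi> t y \<partial>lborel) / l"

lemma AA_meas[measurable]: "AA a l \<in> borel_measurable borel"
proof -
  have "(\<lambda>(t, y). indicator {a..<a+l} (y - t) * GG \<phi> t y) \<in> borel_measurable (lborel \<Otimes>\<^sub>M lborel)"
    by measurable
  then have "(\<lambda>t. \<integral>y. indicator {a..<a+l} (y - t) * GG \<phi> t y \<partial>lborel) \<in> borel_measurable lborel"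
    by (intro lborel.borel_measurable_lebesgue_integral) simp
  then show ?thesis unfolding AA_def by simp
qed

lemma Phi_eq: "averaged_phi \<phi> x = (\<integral>t. indicator {0..1} t * GG \<phi> t (x + t) \<partial>lborel)"
  unfolding averaged_phi_def set_lebesgue_integral_def
  by (intro Bochner_Integration.integral_cong) (auto simp: indicator_def GG_eq)

lemma Phi_meas[measurable]: "averaged_phi \<phi> \<in> borel_measurable borel"
proof -
  have "(\<lambda>(x, t). indicator {0..1} t * GG \<phi> t (x + t)) \<in> borel_measurable (lborel \<Otimes>\<^sub>M lborel)"
    by measurable
  then have "(\<lambda>x. \<integral>t. indicator {0..1} t * GG \<phi> t (x + t) \<partial>lborel) \<in> borel_measurable lborel"
    by (intro lborel.borel_measurable_lebesgue_integral) simp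
  then show ?thesis unfolding Phi_eq[abs_def] by simp
qed

lemma Phi_per: "averaged_phi \<phi> (x + 1) = averaged_phi \<phi> x"
proof -
  have "\<And>t. frac (x + 1 + t) = frac (x + t)"
  proof -
    fix t have "x + 1 + t = (x + t) + 1" by simp
    then show "frac (x + 1 + t) = frac (x + t)" by (simp only: frac_1_eq)
  qed
  then show ?thesis unfolding averaged_phi_def by simp
qed

lemma FF_x_int: "(\<integral>t. FF a l t x \<partial>lborel) = indicator {a..<a+l} x * averaged_phi \<phi> x"
proof -
  have "(\<integral>t. FF a l t x \<partial>lborel) = (\<integral>t. indicator {a..<a+l} x * (indicator {0..1} t * GG \<phi> t (x + t)) \<partial>lborel)"
    unfolding FF_def by (simp add: algebra_simps)
  also have "\<dots> = indicator {a..<a+l} x * (\<integral>t. indicator {0..1} t * GG \<phi> t (x + t) \<partial>lborel)"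
    by (rule integral_mult_right_zero)
  finally show ?thesis unfolding Phi_eq .
qed

lemma FF_t_int:
  assumes l: "0 < l"
  shows "(\<integral>x. FF a l t x \<partial>lborel) = indicator {0..1} t * (l * AA a l t)"
proof (cases "t \<in> {0..1}")
  case True
  have "(\<integral>x. FF a l t x \<partial>lborel) = (LINT x:{a..<a+l}|lborel. \<phi> t (frac (x + t)))"
    unfolding set_lebesgue_integral_def using FF_in[OF True]
    by (intro Bochner_Integration.integral_cong) auto
  also have "\<dots> = (LINT y:{a + t..<a + l + t}|lborel. \<phi> t (frac y))"
    by (rule shift_set_integral[symmetric])
  also have "\<dots> = (\<integral>y. indicator {a..<a+l} (y - t) * GG \<phi> t y \<partial>lborel)"
    unfolding set_lebesgue_integral_def
    by (intro Bochner_Integration.integral_cong) (auto simp: indicator_def GG_eq[OF True])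
  finally show ?thesis using True l unfolding AA_def by simp
next
  case False
  then show ?thesis using FF_out by simp
qed

lemma main_int:
  assumes l: "0 < l" "l \<le> 1"
  shows "set_integrable lborel {a..<a+l} (averaged_phi \<phi>)"
    "avg (averaged_phi \<phi>) {a..<a+l} = (\<integral>t. indicator {0..1} t * AA a l t \<partial>lborel)"
proof -
  have FI: "integrable (lborel \<Otimes>\<^sub>M lborel) (case_prod (FF a l))"
    using FF_integrable[OF l, of a] by (simp add: case_prod_beta')
  have "integrable lborel (\<lambda>x. \<integral>t. FF a l t x \<partial>lborel)"
    by (rule lborel_pair.integrable_snd[OF FI])
  then show "set_integrable lborel {a..<a+l} (averaged_phi \<phi>)"
    unfolding set_integrable_def FF_x_int by simp
  have "(LINT x:{a..<a+l}|lborel. averaged_phi \<phi> x) = (\<integral>x. \<integral>t. FF a l t x \<partial>lborel \<partial>lborel)"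
    unfolding set_lebesgue_integral_def FF_x_int by simp
  also have "\<dots> = (\<integral>t. \<integral>x. FF a l t x \<partial>lborel \<partial>lborel)"
    by (rule lborel_pair.Fubini_integral[OF FI])
  also have "\<dots> = (\<integral>t. l * (indicator {0..1} t * AA a l t) \<partial>lborel)"
    unfolding FF_t_int[OF l(1)] by (simp add: algebra_simps)
  also have "\<dots> = l * (\<integral>t. indicator {0..1} t * AA a l t \<partial>lborel)"
    by (rule integral_mult_right_zero)
  finally show "avg (averaged_phi \<phi>) {a..<a+l} = (\<integral>t. indicator {0..1} t * AA a l t \<partial>lborel)"
    using l unfolding avg_def by simp
qed

end

context fam begin

lemma AA_set: "t \<in> {0..1} \<Longrightarrow> (\<integral>y. indicator {a..<a+l} (y - t) * GG \<phi> t y \<partial>lborel)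
   = (LINT y:{a + t..<a + t + l}|lborel. \<phi> t (frac y))"
  unfolding set_lebesgue_integral_def
  by (intro Bochner_Integration.integral_cong) (auto simp: indicator_def GG_eq)

lemma AA_avg: "t \<in> {0..1} \<Longrightarrow> 0 < l \<Longrightarrow> AA a l t = avg (\<lambda>y. \<phi> t (frac y)) {a + t..<a + t + l}"
  unfolding AA_def avg_def by (simp add: AA_set)

lemma AA_bound:
  assumes t: "t \<in> {0..1}" and l: "0 < l" "l \<le> 1"
  shows "\<bar>AA a l t\<bar> \<le> 4 * C / l"
proof -
  interpret P: perfun "\<lambda>y. \<phi> t (frac y)" C using pf[OF t] .
  have "\<bar>\<integral>y. indicator {a..<a+l} (y - t) * GG \<phi> t y \<partial>lborel\<bar> \<le> (\<integral>y. \<bar>indicator {a..<a+l} (y - t) * GG \<phi> t y\<bar> \<partial>lborel)"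
    by (rule integral_abs_bound)
  also have "\<dots> = (LINT y:{a + t..<a + t + l}|lborel. \<bar>\<phi> t (frac y)\<bar>)"
    unfolding set_lebesgue_integral_def
    by (intro Bochner_Integration.integral_cong) (auto simp: indicator_def GG_eq[OF t])
  also have "\<dots> \<le> 4 * C" by (rule P.L1_bound) (use l in auto)
  finally show ?thesis using l unfolding AA_def by (simp add: divide_simps abs_divide)
qed

lemma main_AE:
  assumes l: "0 < l" "l \<le> 1"
  shows "AE x in lborel. x \<in> {a..<a+l} \<longrightarrow> avg (averaged_phi \<phi>) {a..<a+l} - 9 * C \<le> averaged_phi \<phi> x"
proof -
  define Pr where "Pr t x \<longleftrightarrow> (t \<in> {0..1} \<longrightarrow> x \<in> {a..<a+l} \<longrightarrow> AA a l t - C * Hf l (a + t) \<le> GG \<phi> t (x + t))" for t x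
  have all_t: "AE x in lborel. Pr t x" for t
  proof (cases "t \<in> {0..1}")
    case False then show ?thesis unfolding Pr_def by (intro AE_I2) auto
  next
    case True
    interpret P: perfun "\<lambda>y. \<phi> t (frac y)" C using pf[OF True] .
    have c: "AE y in lborel. y \<in> {a + t..<a + l + t} \<longrightarrow> AA a l t - C * Hf l (a + t) \<le> \<phi> t (frac y)"
      using P.core[OF l, of "a + t"] AA_avg[OF True l(1), of a] by (simp add: add_ac)
    have "AE x in lborel. x \<in> {a..<a+l} \<longrightarrow> AA a l t - C * Hf l (a + t) \<le> \<phi> t (frac (x + t))"
      by (rule shift_set_AE[OF _ c]) (use P.meas in measurable)
    then show ?thesis unfolding Pr_def using GG_eq[OF True] by simp
  qed
  have sets: "{z \<in> space (lborel \<Otimes>\<^sub>M lborel). Pr (fst z) (snd z)} \<in> sets (lborel \<Otimes>\<^sub>M lborel)"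
    by (rule predE) (unfold Pr_def, measurable)
  have "AE t in lborel. AE x in lborel. Pr t x" using all_t by simp
  then have AEx: "AE x in lborel. AE t in lborel. Pr t x"
    by (subst (asm) lborel_pair.AE_commute[OF sets])
  have FI: "integrable (lborel \<Otimes>\<^sub>M lborel) (case_prod (FF a l))"
    using FF_integrable[OF l, of a] by (simp add: case_prod_beta')
  have AEint: "AE x in lborel. integrable lborel (\<lambda>t. FF a l t x)"
    by (rule lborel_pair.AE_integrable_snd[OF FI])
  have intA: "integrable lborel (\<lambda>t. indicator {0..1} t * AA a l t)"
    by (rule int_bdd[where B="4 * C / l"]) (use AA_bound l in auto)
  have intH: "integrable lborel (\<lambda>t. indicator {0..1} t * Hf l (a + t))" by (rule H_int(1)[OF l])
  have eqr: "(\<lambda>t. indicator {0..1} t * (AA a l t - C * Hf l (a + t)))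
      = (\<lambda>t. indicator {0..1} t * AA a l t - C * (indicator {0..1} t * Hf l (a + t)))"
    by (auto simp: fun_eq_iff algebra_simps)
  have intR: "integrable lborel (\<lambda>t. indicator {0..1} t * (AA a l t - C * Hf l (a + t)))"
    unfolding eqr by (intro Bochner_Integration.integrable_diff integrable_mult_right intA intH)
  have valR: "(\<integral>t. indicator {0..1} t * (AA a l t - C * Hf l (a + t)) \<partial>lborel)
      \<ge> avg (averaged_phi \<phi>) {a..<a+l} - 9 * C"
  proof -
    have "(\<integral>t. indicator {0..1} t * (AA a l t - C * Hf l (a + t)) \<partial>lborel)
       = (\<integral>t. indicator {0..1} t * AA a l t \<partial>lborel) - C * (\<integral>t. indicator {0..1} t * Hf l (a + t) \<partial>lborel)"
      unfolding eqr by (simp add: Bochner_Integration.integral_diff[OF intA integrable_mult_right[OF intH]])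
    moreover have "C * (\<integral>t. indicator {0..1} t * Hf l (a + t) \<partial>lborel) \<le> C * 9"
      using H_int(2)[OF l, of a] Cnn by (simp add: mult_left_mono)
    ultimately show ?thesis using main_int(2)[OF l, of a] by simp
  qed
  show ?thesis
    using AEx AEint
  proof eventually_elim
    fix x assume h1: "AE t in lborel. Pr t x" and h2: "integrable lborel (\<lambda>t. FF a l t x)"
    show "x \<in> {a..<a+l} \<longrightarrow> avg (averaged_phi \<phi>) {a..<a+l} - 9 * C \<le> averaged_phi \<phi> x"
    proof
      assume xQ: "x \<in> {a..<a+l}"
      have FFx: "(\<lambda>t. FF a l t x) = (\<lambda>t. indicator {0..1} t * GG \<phi> t (x + t))"
        using xQ unfolding FF_def by (auto simp: fun_eq_iff)
      have "(\<integral>t. indicator {0..1} t * (AA a l t - C * Hf l (a + t)) \<partial>lborel)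
          \<le> (\<integral>t. indicator {0..1} t * GG \<phi> t (x + t) \<partial>lborel)"
        apply (rule integral_mono_AE[OF intR h2[unfolded FFx]])
        using h1 xQ unfolding Pr_def by (auto simp: indicator_def elim!: AE_mp intro!: AE_I2)
      then show "avg (averaged_phi \<phi>) {a..<a+l} - 9 * C \<le> averaged_phi \<phi> x"
        using valR unfolding Phi_eq by linarith
    qed
  qed
qed

end

lemma circle_arc_frac: "circle_arc a l = circle_arc (frac a) l"
  unfolding circle_arc_def by simp

lemma frac_shift1: "1 \<le> y \<Longrightarrow> y < 2 \<Longrightarrow> frac y = y - 1"
proof -
  assume "1 \<le> y" "y < 2"
  then have "frac ((y - 1) + 1) = y - 1" by (simp only: frac_1_eq) (simp add: frac_eq)
  then show ?thesis by simp
qed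

lemma circle_set:
  assumes a: "0 \<le> a" "a < 1" and l: "0 < l" "l \<le> 1"
  shows "circle_arc a l = {x. 0 \<le> x \<and> x < 1 \<and> (a \<le> x \<and> x < a + l \<or> x < a + l - 1)}"
proof
  show "circle_arc a l \<subseteq> {x. 0 \<le> x \<and> x < 1 \<and> (a \<le> x \<and> x < a + l \<or> x < a + l - 1)}"
  proof
    fix x assume "x \<in> circle_arc a l"
    then obtain s where s: "0 \<le> s" "s < l" "x = frac (a + s)" unfolding circle_arc_def by auto
    show "x \<in> {x. 0 \<le> x \<and> x < 1 \<and> (a \<le> x \<and> x < a + l \<or> x < a + l - 1)}"
    proof (cases "a + s < 1")
      case True
      then have "x = a + s" using s a by (simp add: frac_eq)
      then show ?thesis using s a True by auto
    next
      case False
      then have "x = a + s - 1" using s a l frac_shift1[of "a + s"] by simp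
      then show ?thesis using s a l False by auto
    qed
  qed
  show "{x. 0 \<le> x \<and> x < 1 \<and> (a \<le> x \<and> x < a + l \<or> x < a + l - 1)} \<subseteq> circle_arc a l"
  proof
    fix x assume x: "x \<in> {x. 0 \<le> x \<and> x < 1 \<and> (a \<le> x \<and> x < a + l \<or> x < a + l - 1)}"
    show "x \<in> circle_arc a l"
    proof (cases "a \<le> x \<and> x < a + l")
      case True
      have "x = frac (a + (x - a))" using x by (simp add: frac_eq)
      then show ?thesis unfolding circle_arc_def using True by (intro image_eqI[of _ _ "x - a"]) auto
    next
      case False
      then have xl: "x < a + l - 1" using x by auto
      have "frac (a + (x + 1 - a)) = frac (x + 1)" by simp
      also have "\<dots> = x" using x by (simp add: frac_1_eq frac_eq)
      finally have "x = frac (a + (x + 1 - a))" by simp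
      then show ?thesis unfolding circle_arc_def using x xl a by (intro image_eqI[of _ _ "x + 1 - a"]) auto
    qed
  qed
qed

lemma circle_case1:
  assumes "0 \<le> a" "a < 1" "0 < l" "l \<le> 1" "a + l \<le> 1"
  shows "circle_arc a l = {a..<a+l}"
  using assms by (subst circle_set) auto

lemma circle_case2:
  assumes "0 \<le> a" "a < 1" "0 < l" "l \<le> 1" "1 < a + l"
  shows "circle_arc a l = {a..<1} \<union> {0..<a+l-1}"
  using assms by (subst circle_set) auto

lemma circle_sets:
  assumes l: "0 < l" "l \<le> 1"
  shows "circle_arc a l \<in> sets lborel"
proof -
  have fa: "0 \<le> frac a" "frac a < 1" by (auto simp: frac_lt_1)
  show ?thesis
  proof (cases "frac a + l \<le> 1")
    case True
    then show ?thesis using circle_case1[OF fa l] circle_arc_frac by simp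
  next
    case False
    then show ?thesis using circle_case2[OF fa l] circle_arc_frac by simp
  qed
qed

lemma AE_sub':
  assumes "AE y in lborel. y \<in> A \<longrightarrow> P y" "B \<subseteq> A"
  shows "AE y in lborel. y \<in> B \<longrightarrow> P y"
  using assms by (auto elim: AE_mp)

lemma transfer:
  fixes \<Psi> :: "real \<Rightarrow> real"
  assumes per: "\<And>x. \<Psi> (x + 1) = \<Psi> x" and meas: "\<Psi> \<in> borel_measurable borel"
    and a: "0 \<le> a" "a < 1" and l: "0 < l" "l \<le> 1"
    and si: "set_integrable lborel {a..<a+l} \<Psi>"
    and ae: "AE x in lborel. x \<in> {a..<a+l} \<longrightarrow> c \<le> \<Psi> x"
  shows "set_integrable lborel (circle_arc a l) \<Psi>"
    "(LINT x:circle_arc a l|lborel. \<Psi> x) = (LINT x:{a..<a+l}|lborel. \<Psi> x)"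
    "AE x in lborel. x \<in> circle_arc a l \<longrightarrow> c \<le> \<Psi> x"
proof -
  have "set_integrable lborel (circle_arc a l) \<Psi> \<and>
    (LINT x:circle_arc a l|lborel. \<Psi> x) = (LINT x:{a..<a+l}|lborel. \<Psi> x) \<and>
    (AE x in lborel. x \<in> circle_arc a l \<longrightarrow> c \<le> \<Psi> x)"
  proof (cases "a + l \<le> 1")
    case True
    then show ?thesis using circle_case1[OF a l True] si ae by simp
  next
    case False
    define T where "T = a + l - 1"
    have T: "0 < T" "T \<le> a" using False l unfolding T_def by auto
    have S: "circle_arc a l = {a..<1} \<union> {0..<T}" using circle_case2[OF a l] False unfolding T_def by simp
    have s1: "set_integrable lborel {a..<1} \<Psi>"
      by (rule set_integrable_subset[OF si]) (use False in auto)
    have s2: "set_integrable lborel {1..<a+l} \<Psi>"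
      by (rule set_integrable_subset[OF si]) (use a in auto)
    have e1: "{0 + 1..<T + 1} = {1..<a+l}" unfolding T_def by simp
    have s3: "set_integrable lborel {0..<T} \<Psi>"
      using s2 unfolding e1[symmetric] shift_set_integrable per .
    have disj: "{a..<1} \<inter> {0..<T} = {}" using T by auto
    have i1: "set_integrable lborel (circle_arc a l) \<Psi>"
      unfolding S by (rule set_integrable_Un[OF s1 s3]) auto
    have "(LINT x:{a..<a+l}|lborel. \<Psi> x) = (LINT x:{a..<1}|lborel. \<Psi> x) + (LINT x:{1..<a+l}|lborel. \<Psi> x)"
      by (rule Ico_split_integral[OF _ _ s1 s2]) (use a False in auto)
    also have "(LINT x:{1..<a+l}|lborel. \<Psi> x) = (LINT x:{0..<T}|lborel. \<Psi> x)"
      unfolding e1[symmetric] shift_set_integral per ..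
    also have "(LINT x:{a..<1}|lborel. \<Psi> x) + (LINT x:{0..<T}|lborel. \<Psi> x) = (LINT x:circle_arc a l|lborel. \<Psi> x)"
      unfolding S by (rule set_integral_Un[OF disj s1 s3, symmetric])
    finally have i2: "(LINT x:circle_arc a l|lborel. \<Psi> x) = (LINT x:{a..<a+l}|lborel. \<Psi> x)" ..
    have ae1: "AE x in lborel. x \<in> {0 + 1..<T + 1} \<longrightarrow> c \<le> \<Psi> x"
      unfolding e1 by (rule AE_sub'[OF ae]) (use a in auto)
    have "AE x in lborel. x \<in> {0..<T} \<longrightarrow> c \<le> \<Psi> (x + 1)"
      by (rule shift_set_AE[OF _ ae1]) (use meas in measurable)
    then have ae2: "AE x in lborel. x \<in> {0..<T} \<longrightarrow> c \<le> \<Psi> x" unfolding per .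
    have ae3: "AE x in lborel. x \<in> {a..<1} \<longrightarrow> c \<le> \<Psi> x"
      by (rule AE_sub'[OF ae]) (use False in auto)
    have "AE x in lborel. x \<in> circle_arc a l \<longrightarrow> c \<le> \<Psi> x"
      unfolding S using ae2 ae3 by eventually_elim auto
    then show ?thesis using i1 i2 by simp
  qed
  then show "set_integrable lborel (circle_arc a l) \<Psi>"
    "(LINT x:circle_arc a l|lborel. \<Psi> x) = (LINT x:{a..<a+l}|lborel. \<Psi> x)"
    "AE x in lborel. x \<in> circle_arc a l \<longrightarrow> c \<le> \<Psi> x" by auto
qed

lemma measure_circle:
  assumes l: "0 < l" "l \<le> 1"
  shows "measure lborel (circle_arc a l) = l"
proof -
  have fa: "0 \<le> frac a" "frac a < 1" by (auto simp: frac_lt_1)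
  have si: "set_integrable lborel {frac a..<frac a + l} (\<lambda>_. 1::real)"
    unfolding set_integrable_def using l by (auto intro!: integrable_real_indicator simp: emeasure_lborel_Ico)
  have t: "(LINT x:circle_arc (frac a) l|lborel. (1::real)) = (LINT x:{frac a..<frac a+l}|lborel. 1)"
    by (rule transfer(2)[OF _ _ fa l si, of 0]) auto
  have sub: "circle_arc (frac a) l \<subseteq> {0..<1}"
    unfolding circle_arc_def by (auto simp: frac_lt_1)
  have fin: "emeasure lborel (circle_arc (frac a) l) \<noteq> \<infinity>"
  proof -
    have "emeasure lborel (circle_arc (frac a) l) \<le> emeasure lborel {0..<1::real}"
      by (rule emeasure_mono[OF sub]) simp
    then show ?thesis by (auto simp: top_unique)
  qed
  have sc: "(LINT x:circle_arc (frac a) l|lborel. (1::real)) = measure lborel (circle_arc (frac a) l) *\<^sub>R (1::real)"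
    by (rule set_integral_const[OF circle_sets[OF l] fin])
  have "measure lborel (circle_arc (frac a) l) = (LINT x:circle_arc (frac a) l|lborel. (1::real))"
    using sc by simp
  also have "\<dots> = l" unfolding t using set_integral_const_Ico[of "frac a" "frac a + l" 1] l by simp
  finally show ?thesis using circle_arc_frac by metis
qed

lemma hyp_to_AE_a:
  assumes I: "I \<in> sets lborel" and h: "ereal v - ess_inf_on I f \<le> ereal c"
  shows "AE x in lborel. x \<in> I \<longrightarrow> v - c \<le> f x"
proof -
  define S where "S = esssup (restrict_space lborel I) (\<lambda>x. - ereal (f x))"
  have ae: "AE x in restrict_space lborel I. - ereal (f x) \<le> S" unfolding S_def by (rule esssup_AE)
  have h': "ereal v + S \<le> ereal c" using h unfolding ess_inf_on_def S_def[symmetric] by (simp add: minus_ereal_def)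
  have Sb: "S \<le> ereal (c - v)"
  proof (cases S)
    case (real r) then show ?thesis using h' by simp
  next
    case PInf then show ?thesis using h' by simp
  next
    case MInf then show ?thesis by simp
  qed
  have "AE x in restrict_space lborel I. v - c \<le> f x"
    using ae by eventually_elim (use Sb in \<open>auto dest: order_trans[OF _ Sb]\<close>)
  then show ?thesis using I by (subst (asm) AE_restrict_space_iff) auto
qed

lemma hyp_to_AE_b:
  assumes I: "I \<in> sets lborel" and h: "ess_sup_on I f - ereal v \<le> ereal c"
  shows "AE x in lborel. x \<in> I \<longrightarrow> f x \<le> v + c"
proof -
  define S where "S = esssup (restrict_space lborel I) (\<lambda>x. ereal (f x))"
  have ae: "AE x in restrict_space lborel I. ereal (f x) \<le> S" unfolding S_def by (rule esssup_AE)
  have h': "S - ereal v \<le> ereal c" using h unfolding ess_sup_on_def S_def[symmetric] .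
  have Sb: "S \<le> ereal (v + c)"
  proof (cases S)
    case (real r) then show ?thesis using h' by simp
  next
    case PInf then show ?thesis using h' by simp
  next
    case MInf then show ?thesis by simp
  qed
  have "AE x in restrict_space lborel I. f x \<le> v + c"
    using ae by eventually_elim (use Sb in \<open>auto dest: order_trans[OF _ Sb]\<close>)
  then show ?thesis using I by (subst (asm) AE_restrict_space_iff) auto
qed

lemma concl_a:
  assumes I: "I \<in> sets lborel" and fm: "f \<in> borel_measurable borel"
    and ae: "AE x in lborel. x \<in> I \<longrightarrow> v - D \<le> f x"
  shows "ereal v - ess_inf_on I f \<le> ereal D"
proof -
  define S where "S = esssup (restrict_space lborel I) (\<lambda>x. - ereal (f x))"
  have m: "(\<lambda>x. - ereal (f x)) \<in> borel_measurable (restrict_space lborel I)"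
    by (rule measurable_restrict_space1) (use fm in measurable)
  have ae': "AE x in restrict_space lborel I. - ereal (f x) \<le> ereal (D - v)"
    using ae I by (subst AE_restrict_space_iff) (auto elim!: AE_mp)
  have Sb: "S \<le> ereal (D - v)" unfolding S_def by (rule esssup_I[OF m ae'])
  have "ereal v - ess_inf_on I f = ereal v + S" unfolding ess_inf_on_def S_def[symmetric] by (simp add: minus_ereal_def)
  also have "\<dots> \<le> ereal D"
  proof (cases S)
    case (real r) then show ?thesis using Sb by simp
  next
    case PInf then show ?thesis using Sb by simp
  next
    case MInf then show ?thesis by simp
  qed
  finally show ?thesis .
qed

lemma concl_b:
  assumes I: "I \<in> sets lborel" and fm: "f \<in> borel_measurable borel"
    and ae: "AE x in lborel. x \<in> I \<longrightarrow> f x \<le> v + D"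
  shows "ess_sup_on I f - ereal v \<le> ereal D"
proof -
  define S where "S = esssup (restrict_space lborel I) (\<lambda>x. ereal (f x))"
  have m: "(\<lambda>x. ereal (f x)) \<in> borel_measurable (restrict_space lborel I)"
    by (rule measurable_restrict_space1) (use fm in measurable)
  have ae': "AE x in restrict_space lborel I. ereal (f x) \<le> ereal (v + D)"
    using ae I by (subst AE_restrict_space_iff) (auto elim!: AE_mp)
  have Sb: "S \<le> ereal (v + D)" unfolding S_def by (rule esssup_I[OF m ae'])
  have "ess_sup_on I f - ereal v = S - ereal v" unfolding ess_sup_on_def S_def ..
  also have "\<dots> \<le> ereal D"
  proof (cases S)
    case (real r) then show ?thesis using Sb by simp
  next
    case PInf then show ?thesis using Sb by simp
  next
    case MInf then show ?thesis by simp
  qed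
  finally show ?thesis .
qed

context fam begin

lemma fam_result:
  assumes l: "0 < l" "l \<le> 1"
  shows "set_integrable lborel (circle_arc a l) (averaged_phi \<phi>) \<and>
    (AE x in lborel. x \<in> circle_arc a l \<longrightarrow> avg (averaged_phi \<phi>) (circle_arc a l) - 9 * C \<le> averaged_phi \<phi> x)"
proof -
  define b where "b = frac a"
  have b: "0 \<le> b" "b < 1" unfolding b_def by (auto simp: frac_lt_1)
  have ca: "circle_arc a l = circle_arc b l" unfolding b_def by (rule circle_arc_frac)
  note si = main_int(1)[OF l, of b]
  note ae = main_AE[OF l, of b]
  note tr = transfer[OF Phi_per Phi_meas b l si ae]
  have "avg (averaged_phi \<phi>) (circle_arc b l) = avg (averaged_phi \<phi>) {b..<b+l}"
    unfolding avg_def tr(2) measure_circle[OF l] using l by simp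
  then show ?thesis using tr(1,3) unfolding ca by simp
qed

end

lemma adm_of: "admissible_family \<phi> \<Longrightarrow> adm0 \<phi>"
  unfolding admissible_family_def adm0_def by auto

lemma adm_neg: "adm0 \<phi> \<Longrightarrow> adm0 (\<lambda>t x. - \<phi> t x)"
proof -
  assume a: "adm0 \<phi>"
  have m: "(\<lambda>(t, x). \<phi> t x) \<in> borel_measurable (restrict_space (lborel \<Otimes>\<^sub>M lborel) ({0..1} \<times> {0..<1}))"
    using a unfolding adm0_def by simp
  have "(\<lambda>z. - (\<lambda>(t, x). \<phi> t x) z) \<in> borel_measurable (restrict_space (lborel \<Otimes>\<^sub>M lborel) ({0..1} \<times> {0..<1}))"
    using m by (rule borel_measurable_uminus)
  then have m': "(\<lambda>(t, x). - \<phi> t x) \<in> borel_measurable (restrict_space (lborel \<Otimes>\<^sub>M lborel) ({0..1} \<times> {0..<1}))"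
    by (simp add: case_prod_beta')
  have "\<forall>t\<in>{0..1}. set_integrable lborel {0..<1} (\<lambda>x. - \<phi> t x) \<and> (LINT x:{0..<1}|lborel. - \<phi> t x) = 0"
    using a unfolding adm0_def set_integrable_def set_lebesgue_integral_def by auto
  then show ?thesis using m' unfolding adm0_def by simp
qed

lemma avg_neg: "avg (\<lambda>x. - f x) I = - avg f I"
  unfolding avg_def set_lebesgue_integral_def by simp

lemma averaged_neg: "averaged_phi (\<lambda>t x. - \<phi> t x) = (\<lambda>x. - averaged_phi \<phi> x)"
  unfolding averaged_phi_def set_lebesgue_integral_def by (simp add: fun_eq_iff)

lemma dy_in: "j < 2^k \<Longrightarrow> dy k (int j) \<in> dyadic_intervals"
  unfolding dyadic_intervals_def dy_def by auto

theorem mainTheorem5: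
  shows "(\<forall>C3d::real. \<exists>C3::real. \<forall>\<phi>.
            admissible_family \<phi> \<and>
            (\<forall>t\<in>{0..1}. \<forall>I\<in>dyadic_intervals.
                ereal (avg (\<phi> t) I) - ess_inf_on I (\<phi> t) \<le> ereal C3d)
            \<longrightarrow> (\<forall>a l. 0 < l \<and> l \<le> 1 \<longrightarrow>
                   set_integrable lborel (circle_arc a l) (averaged_phi \<phi>) \<and>
                   ereal (avg (averaged_phi \<phi>) (circle_arc a l))
                     - ess_inf_on (circle_arc a l) (averaged_phi \<phi>) \<le> ereal C3))
       \<and>
         (\<forall>C4d::real. \<exists>C4::real. \<forall>\<phi>.
            admissible_family \<phi> \<and>
            (\<forall>t\<in>{0..1}. \<forall>I\<in>dyadic_intervals.
                ess_sup_on I (\<phi> t) - ereal (avg (\<phi> t) I) \<le> ereal C4d)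
            \<longrightarrow> (\<forall>a l. 0 < l \<and> l \<le> 1 \<longrightarrow>
                   set_integrable lborel (circle_arc a l) (averaged_phi \<phi>) \<and>
                   ess_sup_on (circle_arc a l) (averaged_phi \<phi>)
                     - ereal (avg (averaged_phi \<phi>) (circle_arc a l)) \<le> ereal C4))"
proof (intro conjI allI)
  fix C3d :: real
  define C where "C = max C3d 0"
  show "\<exists>C3::real. \<forall>\<phi>.
            admissible_family \<phi> \<and>
            (\<forall>t\<in>{0..1}. \<forall>I\<in>dyadic_intervals.
                ereal (avg (\<phi> t) I) - ess_inf_on I (\<phi> t) \<le> ereal C3d)
            \<longrightarrow> (\<forall>a l. 0 < l \<and> l \<le> 1 \<longrightarrow>
                   set_integrable lborel (circle_arc a l) (averaged_phi \<phi>) \<and>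
                   ereal (avg (averaged_phi \<phi>) (circle_arc a l))
                     - ess_inf_on (circle_arc a l) (averaged_phi \<phi>) \<le> ereal C3)"
  proof (intro exI[of _ "9 * C"] allI impI)
    fix \<phi> :: "real \<Rightarrow> real \<Rightarrow> real" and a l :: real
    assume h: "admissible_family \<phi> \<and>
            (\<forall>t\<in>{0..1}. \<forall>I\<in>dyadic_intervals.
                ereal (avg (\<phi> t) I) - ess_inf_on I (\<phi> t) \<le> ereal C3d)"
      and l: "0 < l \<and> l \<le> 1"
    have Cnn: "0 \<le> C" unfolding C_def by simp
    have dA: "dyadAE \<phi> C" unfolding dyadAE_def
    proof (intro ballI allI impI)
      fix t :: real and k :: nat and j :: nat assume t: "t \<in> {0..1}" and j: "j < 2^k"
      have "ereal (avg (\<phi> t) (dy k (int j))) - ess_inf_on (dy k (int j)) (\<phi> t) \<le> ereal C3d"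
        using h t dy_in[OF j] by blast
      also have "\<dots> \<le> ereal C" unfolding C_def by simp
      finally show "AE y in lborel. y \<in> dy k (int j) \<longrightarrow> avg (\<phi> t) (dy k (int j)) - C \<le> \<phi> t y"
        by (rule hyp_to_AE_a[OF dy_sets])
    qed
    interpret F: fam \<phi> C using adm_of h dA Cnn by unfold_locales auto
    have r: "set_integrable lborel (circle_arc a l) (averaged_phi \<phi>) \<and>
      (AE x in lborel. x \<in> circle_arc a l \<longrightarrow> avg (averaged_phi \<phi>) (circle_arc a l) - 9 * C \<le> averaged_phi \<phi> x)"
      using F.fam_result l by auto
    show "set_integrable lborel (circle_arc a l) (averaged_phi \<phi>) \<and>
                   ereal (avg (averaged_phi \<phi>) (circle_arc a l))
                     - ess_inf_on (circle_arc a l) (averaged_phi \<phi>) \<le> ereal (9 * C)"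
      using r concl_a[OF circle_sets F.Phi_meas] l by auto
  qed
next
  fix C4d :: real
  define C where "C = max C4d 0"
  show "\<exists>C4::real. \<forall>\<phi>.
            admissible_family \<phi> \<and>
            (\<forall>t\<in>{0..1}. \<forall>I\<in>dyadic_intervals.
                ess_sup_on I (\<phi> t) - ereal (avg (\<phi> t) I) \<le> ereal C4d)
            \<longrightarrow> (\<forall>a l. 0 < l \<and> l \<le> 1 \<longrightarrow>
                   set_integrable lborel (circle_arc a l) (averaged_phi \<phi>) \<and>
                   ess_sup_on (circle_arc a l) (averaged_phi \<phi>)
                     - ereal (avg (averaged_phi \<phi>) (circle_arc a l)) \<le> ereal C4)"
  proof (intro exI[of _ "9 * C"] allI impI)
    fix \<phi> :: "real \<Rightarrow> real \<Rightarrow> real" and a l :: real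
    assume h: "admissible_family \<phi> \<and>
            (\<forall>t\<in>{0..1}. \<forall>I\<in>dyadic_intervals.
                ess_sup_on I (\<phi> t) - ereal (avg (\<phi> t) I) \<le> ereal C4d)"
      and l: "0 < l \<and> l \<le> 1"
    define \<phi>' where "\<phi>' = (\<lambda>t x. - \<phi> t x)"
    have Cnn: "0 \<le> C" unfolding C_def by simp
    have dA: "dyadAE \<phi>' C" unfolding dyadAE_def
    proof (intro ballI allI impI)
      fix t :: real and k :: nat and j :: nat assume t: "t \<in> {0..1}" and j: "j < 2^k"
      have "ess_sup_on (dy k (int j)) (\<phi> t) - ereal (avg (\<phi> t) (dy k (int j))) \<le> ereal C4d"
        using h t dy_in[OF j] by blast
      also have "\<dots> \<le> ereal C" unfolding C_def by simp
      finally have "AE y in lborel. y \<in> dy k (int j) \<longrightarrow> \<phi> t y \<le> avg (\<phi> t) (dy k (int j)) + C"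
        by (rule hyp_to_AE_b[OF dy_sets])
      then show "AE y in lborel. y \<in> dy k (int j) \<longrightarrow> avg (\<phi>' t) (dy k (int j)) - C \<le> \<phi>' t y"
        unfolding \<phi>'_def avg_neg by (auto elim!: AE_mp)
    qed
    have ad: "adm0 \<phi>'" unfolding \<phi>'_def by (rule adm_neg[OF adm_of]) (use h in auto)
    interpret F: fam \<phi>' C using ad dA Cnn by unfold_locales auto
    have r: "set_integrable lborel (circle_arc a l) (averaged_phi \<phi>') \<and>
      (AE x in lborel. x \<in> circle_arc a l \<longrightarrow> avg (averaged_phi \<phi>') (circle_arc a l) - 9 * C \<le> averaged_phi \<phi>' x)"
      using F.fam_result l by auto
    have neg: "averaged_phi \<phi>' = (\<lambda>x. - averaged_phi \<phi> x)" unfolding \<phi>'_def by (rule averaged_neg)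
    have si: "set_integrable lborel (circle_arc a l) (averaged_phi \<phi>)"
    proof -
      have "integrable lborel (\<lambda>x. indicator (circle_arc a l) x *\<^sub>R - averaged_phi \<phi> x)"
        using r neg by (simp add: set_integrable_def)
      then have "integrable lborel (\<lambda>x. - (indicator (circle_arc a l) x *\<^sub>R - averaged_phi \<phi> x))"
        by (rule Bochner_Integration.integrable_minus)
      then show ?thesis unfolding set_integrable_def by simp
    qed
    have ae: "AE x in lborel. x \<in> circle_arc a l \<longrightarrow> averaged_phi \<phi> x \<le> avg (averaged_phi \<phi>) (circle_arc a l) + 9 * C"
      using r unfolding neg avg_neg by (auto elim!: AE_mp)
    have pm: "averaged_phi \<phi> \<in> borel_measurable borel"
    proof -
      have "(\<lambda>x. - averaged_phi \<phi>' x) \<in> borel_measurable borel" using F.Phi_meas by measurable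
      then show ?thesis unfolding neg by simp
    qed
    show "set_integrable lborel (circle_arc a l) (averaged_phi \<phi>) \<and>
                   ess_sup_on (circle_arc a l) (averaged_phi \<phi>)
                     - ereal (avg (averaged_phi \<phi>) (circle_arc a l)) \<le> ereal (9 * C)"
      using si concl_b[OF circle_sets pm ae] l by auto
  qed
qed

end
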